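(* In the setting described in the context, suppose there exists $(z_1,\dots,z_m)\in\boldsymbol{\mathcal H}$ with $-\big(\nabla_1\boldsymbol g_1(z_1,\dots,z_m),\dots,\nabla_m\boldsymbol g_m(z_1,\dots,z_m)\big)\in\partial\boldsymbol f(z_1,\dots,z_m)$, and there exists $\chi\in]0,+\infty[$ such that for all $(x_i),(y_i)\in\boldsymbol{\mathcal H}$, $$\sum_{i=1}^m\|\nabla_i\boldsymbol g_i(x_1,\dots,x_m)-\nabla_i\boldsymbol g_i(y_1,\dots,y_m)\|^2\le\chi^2\sum_{i=1}^m\|x_i-y_i\|^2.$$ Let $\varepsilon\in]0,1/(\chi+1)[$ and let $(\gamma_n)_{n\in\mathbb N}$ be a sequence in $[\varepsilon,(1-\varepsilon)/\chi]$. For every $i$, let $x_{i,0}\in\mathcal H_i$ and let $(a_{i,n})_n,(b_{i,n})_n,(c_{i,n})_n$ be absolutely summable sequences in $\mathcal H_i$. For every $n\in\mathbb N$ define $y_{i,n}=x_{i,n}-\gamma_n(\nabla_i\boldsymbol g_i(x_{1,n},\dots,x_{m,n})+a_{i,n})$ for $i=1,\dots,m$; $(p_{1,n},\dots,p_{m,n})=\operatorname{prox}_{\gamma_n\boldsymbol f}(y_{1,n},\dots,y_{m,n})+(b_{1,n},\dots,b_{m,n})$; $q_{i,n}=p_{i,n}-\gamma_n(\nabla_i\boldsymbol g_i(p_{1,n},\dots,p_{m,n})+c_{i,n})$ and $x_{i,n+1}=x_{i,n}-y_{i,n}+q_{i,n}$ for $i=1,\dots,m$. Then there exists a solution $(\overline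 x_1,\dots,\overline x_m)$ to Problem (P) such that for every $i$, $x_{i,n}\rightharpoonup\overline x_i$ and $p_{i,n}\rightharpoonup\overline x_i$.
   Context: Let $m\ge2$ be an integer and let $\mathcal H_1,\dots,\mathcal H_m$ be real Hilbert spaces. Let $\boldsymbol{\mathcal H}=\mathcal H_1\oplus\cdots\oplus\mathcal H_m$ with inner product $\sum_i\langle x_i,y_i\rangle$. $\Gamma_0(\mathcal K)$ denotes the proper lower semicontinuous convex functions $\mathcal K\to\left]-\infty,+\infty\right]$. Let $\boldsymbol f\in\Gamma_0(\boldsymbol{\mathcal H})$ with subdifferential $\partial\boldsymbol f$. For each $i$, $\boldsymbol g_i:\boldsymbol{\mathcal H}\to\left]-\infty,+\infty\right]$ is such that for every $(x_1,\dots,x_m)$, $x\mapsto\boldsymbol g_i(x_1,\dots,x_{i-1},x,x_{i+1},\dots,x_m)$ is convex and differentiable on $\mathcal H_i$, with gradient $\nabla_i\boldsymbol g_i(x_1,\dots,x_m)$ at $x_i$; and $\sum_i\langle\nabla_i\boldsymbol g_i(\boldsymbol x)-\nabla_i\boldsymbol g_i(\boldsymbol y),x_i-y_i\rangle\ge0$ for all $\boldsymbol x,\boldsymbol y\in\boldsymbol{\mathcal H}$. Problem (P): find $x_1\in\mathcal H_1,\dots,x_m\in\mathcal H_m$ such that for each $i$, $x_i\in\operatorname{Argmin}_{x\in\mathcal H_i}\big(\boldsymbol f(x_1,\dots,x_{i-1},x,x_{i+1},\dots,x_m)+\boldsymbol g_i(x_1,\dots,x_{i-1},x,x_{i+1},\dots,x_m)\big)$.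 For $\varphi\in\Gamma_0(\mathcal K)$, $\operatorname{prox}_\varphi x=\operatorname{argmin}_{y}\big(\varphi(y)+\tfrac12\|x-y\|^2\big)$. $\rightharpoonup$ denotes weak convergence. *)

theory Defs
  imports "HOL-Analysis.Analysis"
begin

text \<open>The spaces H_1..H_m are modelled as closed linear subspaces H i (i in {1..m})
of one ambient real Hilbert space 'a.\<close>

definition PH :: "nat \<Rightarrow> (nat \<Rightarrow> 'a::real_inner set) \<Rightarrow> (nat \<Rightarrow> 'a) set" where
  "PH m H = {x. (\<forall>i\<in>{1..m}. x i \<in> H i) \<and> (\<forall>i. i \<notin> {1..m} \<longrightarrow> x i = 0)}"

definition pinner :: "nat \<Rightarrow> (nat \<Rightarrow> 'a::real_inner) \<Rightarrow> (nat \<Rightarrow> 'a) \<Rightarrow> real" where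
  "pinner m x y = (\<Sum>i\<in>{1..m}. x i \<bullet> y i)"

definition pnormsq :: "nat \<Rightarrow> (nat \<Rightarrow> 'a::real_inner) \<Rightarrow> real" where
  "pnormsq m x = (\<Sum>i\<in>{1..m}. (norm (x i))\<^sup>2)"

definition proper_on :: "(nat \<Rightarrow> 'a::real_inner) set \<Rightarrow> ((nat \<Rightarrow> 'a) \<Rightarrow> ereal) \<Rightarrow> bool" where
  "proper_on S f \<longleftrightarrow> (\<forall>x\<in>S. f x \<noteq> -\<infinity>) \<and> (\<exists>x\<in>S. f x \<noteq> \<infinity>)"

definition lsc_on :: "nat \<Rightarrow> (nat \<Rightarrow> 'a::real_inner set) \<Rightarrow> ((nat \<Rightarrow> 'a) \<Rightarrow> ereal) \<Rightarrow> bool" where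
  "lsc_on m H f \<longleftrightarrow> (\<forall>X x. (\<forall>k. X k \<in> PH m H) \<longrightarrow> x \<in> PH m H \<longrightarrow>
       (\<lambda>k. pnormsq m (X k - x)) \<longlonglongrightarrow> 0 \<longrightarrow> f x \<le> liminf (\<lambda>k. f (X k)))"

definition econvex_on :: "(nat \<Rightarrow> 'a::real_inner) set \<Rightarrow> ((nat \<Rightarrow> 'a) \<Rightarrow> ereal) \<Rightarrow> bool" where
  "econvex_on S f \<longleftrightarrow> (\<forall>x\<in>S. \<forall>y\<in>S. \<forall>t::real. 0 < t \<and> t < 1 \<longrightarrow>
       f (\<lambda>i. t *\<^sub>R x i + (1 - t) *\<^sub>R y i) \<le> ereal t * f x + ereal (1 - t) * f y)"

definition Gamma0 :: "nat \<Rightarrow> (nat \<Rightarrow> 'a::real_inner set) \<Rightarrow> ((nat \<Rightarrow> 'a) \<Rightarrow> ereal) \<Rightarrow> bool" where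
  "Gamma0 m H f \<longleftrightarrow> proper_on (PH m H) f \<and> lsc_on m H f \<and> econvex_on (PH m H) f"

definition subdiff :: "nat \<Rightarrow> (nat \<Rightarrow> 'a::real_inner set) \<Rightarrow> ((nat \<Rightarrow> 'a) \<Rightarrow> ereal) \<Rightarrow> (nat \<Rightarrow> 'a) \<Rightarrow> (nat \<Rightarrow> 'a) set" where
  "subdiff m H f x = {u \<in> PH m H. x \<in> PH m H \<and> f x \<noteq> \<infinity> \<and> f x \<noteq> -\<infinity> \<and>
       (\<forall>y\<in>PH m H. f x + ereal (pinner m u (y - x)) \<le> f y)}"

definition prox :: "nat \<Rightarrow> (nat \<Rightarrow> 'a::real_inner set) \<Rightarrow> ((nat \<Rightarrow> 'a) \<Rightarrow> ereal) \<Rightarrow> (nat \<Rightarrow> 'a) \<Rightarrow> (nat \<Rightarrow> 'a)" where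
  "prox m H \<phi> y = (THE z. z \<in> PH m H \<and> (\<forall>w\<in>PH m H.
       \<phi> z + ereal (pnormsq m (y - z) / 2) \<le> \<phi> w + ereal (pnormsq m (y - w) / 2)))"

definition weak_conv :: "(nat \<Rightarrow> 'a::real_inner) \<Rightarrow> 'a \<Rightarrow> bool" where
  "weak_conv u x \<longleftrightarrow> (\<forall>v. (\<lambda>n. u n \<bullet> v) \<longlonglongrightarrow> x \<bullet> v)"

definition solves_P :: "nat \<Rightarrow> (nat \<Rightarrow> 'a::real_inner set) \<Rightarrow> ((nat \<Rightarrow> 'a) \<Rightarrow> ereal)
    \<Rightarrow> (nat \<Rightarrow> (nat \<Rightarrow> 'a) \<Rightarrow> real) \<Rightarrow> (nat \<Rightarrow> 'a) \<Rightarrow> bool" where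
  "solves_P m H f g x \<longleftrightarrow> x \<in> PH m H \<and> (\<forall>i\<in>{1..m}. \<forall>v\<in>H i.
       f x + ereal (g i x) \<le> f (x(i := v)) + ereal (g i (x(i := v))))"

end

theory Submission
  imports Defs "HOL-Library.Diagonal_Subsequence" "HOL-Library.Function_Algebras"
begin



lemma subspace_closure_my:
  fixes S :: "'a::real_normed_vector set"
  assumes "subspace S" shows "subspace (closure S)"
  unfolding subspace_def
proof (intro conjI ballI allI)
  show "0 \<in> closure S" using assms closure_subset subspace_0 by blast
next
  fix x y assume "x \<in> closure S" "y \<in> closure S"
  then obtain X Y where X: "\<forall>n. X n \<in> S" "X \<longlonglongrightarrow> x" and Y: "\<forall>n. Y n \<in> S" "Y \<longlonglongrightarrow> y"
    unfolding closure_sequential by blast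
  have "\<forall>n. X n + Y n \<in> S" using X Y assms subspace_add by blast
  moreover have "(\<lambda>n. X n + Y n) \<longlonglongrightarrow> x + y" using X Y tendsto_add by blast
  ultimately show "x + y \<in> closure S" unfolding closure_sequential by (intro exI[of _ "\<lambda>n. X n + Y n"]) auto
next
  fix c :: real and x assume "x \<in> closure S"
  then obtain X where X: "\<forall>n. X n \<in> S" "X \<longlonglongrightarrow> x"
    unfolding closure_sequential by blast
  have "\<forall>n. c *\<^sub>R X n \<in> S" using X assms subspace_scale by blast
  moreover have "(\<lambda>n. c *\<^sub>R X n) \<longlonglongrightarrow> c *\<^sub>R x" using X tendsto_scaleR tendsto_const by blast
  ultimately show "c *\<^sub>R x \<in> closure S" unfolding closure_sequential by (intro exI[of _ "\<lambda>n. c *\<^sub>R X n"]) auto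
qed

lemma parallelogram_half:
  fixes a b :: "'a::real_inner"
  shows "(norm a)\<^sup>2 / 2 + (norm b)\<^sup>2 / 2 - (norm ((1/2) *\<^sub>R (a + b)))\<^sup>2 = (norm (a - b))\<^sup>2 / 4"
  by (simp add: power2_norm_eq_inner inner_add_left inner_add_right inner_diff_left inner_diff_right
      inner_commute algebra_simps)

lemma norm_add_scale_sq: fixes q v :: "'a::real_inner"
  shows "(norm (q + t *\<^sub>R v))\<^sup>2 = (norm q)\<^sup>2 + 2*t*(q\<bullet>v) + t\<^sup>2*(norm v)\<^sup>2"
  unfolding power2_norm_eq_inner by (simp add: inner_add_left inner_add_right inner_commute algebra_simps power2_eq_square)

lemma quad_nonneg_coef:
  fixes c N :: real
  assumes "\<forall>t. 0 \<le> t * c + t\<^sup>2 * N / 2" "0 \<le> N"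
  shows "c = 0"
proof -
  define t where "t = -c/(N+1)"
  have tN: "t * (N+1) = -c" unfolding t_def using assms(2) by simp
  have h: "0 \<le> t * c + t\<^sup>2 * N / 2" using assms(1) by blast
  have "0 \<le> (N+1)\<^sup>2 * (t * c + t\<^sup>2 * N / 2)" using h by simp
  also have "(N+1)\<^sup>2 * (t * c + t\<^sup>2 * N / 2) = (t*(N+1))*(N+1)*c + (t*(N+1))\<^sup>2*N/2"
    by (simp add: algebra_simps power2_eq_square)
  also have "\<dots> = c\<^sup>2 * (N/2 - (N+1))" unfolding tN by (simp add: algebra_simps power2_eq_square)
  finally have "0 \<le> c\<^sup>2 * (N/2 - (N+1))" .
  moreover have "N/2 - (N+1) < 0" using assms(2) by simp
  ultimately have "c\<^sup>2 \<le> 0" by (simp add: mult_le_0_iff zero_le_mult_iff)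
  thus ?thesis by simp
qed

lemma lin_aux1: fixes x p q r :: real assumes "x \<le> 4*(p+q)" "p \<le> r" "q \<le> r" shows "x \<le> 8*r"
proof -
  have "x \<le> 4*p + 4*q" using assms(1) by (simp add: distrib_left)
  thus ?thesis using assms by linarith
qed

lemma cauchy_sq_bound:
  fixes W :: "nat \<Rightarrow> 'a::real_normed_vector"
  assumes Wc: "\<And>n k. (norm (W n - W k))\<^sup>2 \<le> 4 * (1 / Suc n + 1 / Suc k)"
  shows "Cauchy W"
proof (rule CauchyI)
  fix e :: real assume e: "0 < e"
  obtain N :: nat where N: "8 / e\<^sup>2 < N" using reals_Archimedean2 by blast
  have Npos: "0 < real N" using N e by (smt (verit) divide_pos_pos zero_less_power)
  show "\<exists>M. \<forall>m\<ge>M. \<forall>n\<ge>M. norm (W m - W n) < e"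
  proof (intro exI allI impI)
    fix a b assume ab: "N \<le> a" "N \<le> b"
    have "1 / real (Suc a) \<le> 1 / N" using ab Npos by (simp add: frac_le)
    moreover have "1 / real (Suc b) \<le> 1 / N" using ab Npos by (simp add: frac_le)
    ultimately have "(norm (W a - W b))\<^sup>2 \<le> 8 * (1 / N)" using Wc[of a b] lin_aux1 by blast
    also have "8 * (1 / N) < e\<^sup>2" using N e Npos by (simp add: field_simps)
    finally have "(norm (W a - W b))\<^sup>2 < e\<^sup>2" .
    thus "norm (W a - W b) < e" using e by (simp add: power_less_imp_less_base)
  qed
qed

lemma riesz_sub:
  fixes M :: "'a::{real_inner,complete_space} set"
  assumes M: "subspace M" "closed M"
    and Ladd: "\<And>x y. x\<in>M \<Longrightarrow> y\<in>M \<Longrightarrow> L (x+y) = L x + L y"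
    and Lsc: "\<And>c x. x\<in>M \<Longrightarrow> L (c *\<^sub>R x) = c * L x"
    and Lb: "\<And>x. x\<in>M \<Longrightarrow> \<bar>L x\<bar> \<le> K * norm x"
  shows "\<exists>q\<in>M. \<forall>v\<in>M. L v = q \<bullet> v"
proof -
  have Ldiff: "L (x - y) = L x - L y" if "x\<in>M" "y\<in>M" for x y
  proof -
    have "L (x + (-1) *\<^sub>R y) = L x + L ((-1) *\<^sub>R y)" using that M Ladd subspace_scale by blast
    thus ?thesis using Lsc[OF that(2), of "-1"] by simp
  qed
  define \<phi> where "\<phi> w = (norm w)\<^sup>2 / 2 - L w" for w
  have lb: "- K\<^sup>2 / 2 \<le> \<phi> w" if "w \<in> M" for w
  proof -
    have "L w \<le> \<bar>K\<bar> * norm w" using Lb[OF that] by (smt (verit) abs_ge_self mult_right_mono norm_ge_zero)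
    moreover have "0 \<le> (norm w - \<bar>K\<bar>)\<^sup>2 / 2" by simp
    ultimately show ?thesis unfolding \<phi>_def by (simp add: power2_diff power2_abs algebra_simps)
  qed
  have M0: "0 \<in> M" using M subspace_0 by blast
  define d where "d = Inf (\<phi> ` M)"
  have bdd: "bdd_below (\<phi> ` M)" by (rule bdd_belowI2[where m="- K\<^sup>2 / 2"], rule lb)
  have dle: "d \<le> \<phi> w" if "w \<in> M" for w unfolding d_def using bdd that by (simp add: cInf_lower)
  have "\<forall>n. \<exists>w\<in>M. \<phi> w < d + 1 / Suc n"
  proof
    fix n
    have "Inf (\<phi> ` M) < d + 1 / Suc n" unfolding d_def by simp
    then obtain y where "y \<in> \<phi> ` M" "y < d + 1 / Suc n" using M0 cInf_lessD[of "\<phi> ` M"] by blast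
    thus "\<exists>w\<in>M. \<phi> w < d + 1 / Suc n" by blast
  qed
  then obtain W where W: "\<And>n. W n \<in> M" "\<And>n. \<phi> (W n) < d + 1 / Suc n" by metis
  have Wc: "(norm (W n - W k))\<^sup>2 \<le> 4 * (1 / Suc n + 1 / Suc k)" for n k
  proof -
    define mid where "mid = (1/2) *\<^sub>R (W n + W k)"
    have midM: "mid \<in> M" unfolding mid_def using M W(1) subspace_add subspace_scale by blast
    have Lmid: "L mid = (L (W n) + L (W k)) / 2" unfolding mid_def
      using Lsc Ladd W(1) M subspace_add by (metis divide_inverse_commute inverse_eq_divide mult.commute times_divide_eq_right)
    have pg: "(norm (W n))\<^sup>2 / 2 + (norm (W k))\<^sup>2 / 2 - (norm mid)\<^sup>2 = (norm (W n - W k))\<^sup>2 / 4"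
      unfolding mid_def by (rule parallelogram_half)
    have "\<phi> (W n) + \<phi> (W k) - 2 * \<phi> mid = (norm (W n - W k))\<^sup>2 / 4"
    proof -
      have "\<phi> (W n) + \<phi> (W k) - 2 * \<phi> mid = (norm (W n))\<^sup>2 / 2 + (norm (W k))\<^sup>2 / 2 - (norm mid)\<^sup>2"
        unfolding \<phi>_def Lmid by (simp add: field_simps)
      thus ?thesis using pg by simp
    qed
    moreover have "d \<le> \<phi> mid" using dle midM by blast
    ultimately have "(norm (W n - W k))\<^sup>2 / 4 \<le> 1 / Suc n + 1 / Suc k" using W(2)[of n] W(2)[of k] by linarith
    thus ?thesis by simp
  qed
  have "Cauchy W"
  proof (rule CauchyI)
    fix e :: real assume e: "0 < e"
    obtain N :: nat where N: "8 / e\<^sup>2 < N" using reals_Archimedean2 by blast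
    have Npos: "0 < real N" using N e by (smt (verit) divide_pos_pos zero_less_power)
    show "\<exists>M. \<forall>m\<ge>M. \<forall>n\<ge>M. norm (W m - W n) < e"
    proof (intro exI allI impI)
      fix a b assume ab: "N \<le> a" "N \<le> b"
      have "1 / real (Suc a) \<le> 1 / N" using ab Npos by (simp add: frac_le)
      moreover have "1 / real (Suc b) \<le> 1 / N" using ab Npos by (simp add: frac_le)
      ultimately have "(norm (W a - W b))\<^sup>2 \<le> 8 * (1 / N)" using Wc[of a b] lin_aux1 by blast
      also have "8 * (1 / N) < e\<^sup>2" using N e Npos by (simp add: field_simps)
      finally have "(norm (W a - W b))\<^sup>2 < e\<^sup>2" .
      thus "norm (W a - W b) < e" using e by (simp add: power_less_imp_less_base)
    qed
  qed
  then obtain q where Wq: "W \<longlonglongrightarrow> q" using Cauchy_convergent_iff convergent_def by blast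
  have qM: "q \<in> M" using closed_sequentially[OF M(2)] W(1) Wq by blast
  have "(\<lambda>n. L (W n)) \<longlonglongrightarrow> L q"
  proof -
    have "(\<lambda>n. norm (W n - q)) \<longlonglongrightarrow> 0" using tendsto_norm_zero[OF LIM_zero[OF Wq]] .
    hence lim0: "(\<lambda>n. \<bar>K\<bar> * norm (W n - q)) \<longlonglongrightarrow> 0" by (rule tendsto_mult_right_zero)
    have bnd: "norm (L (W n) - L q) \<le> \<bar>K\<bar> * norm (W n - q)" for n
    proof -
      have "W n - q \<in> M" using M W(1) qM subspace_diff by blast
      hence "\<bar>L (W n - q)\<bar> \<le> K * norm (W n - q)" by (rule Lb)
      also have "\<dots> \<le> \<bar>K\<bar> * norm (W n - q)" by (intro mult_right_mono) auto
      finally show ?thesis using Ldiff[OF W(1) qM] by simp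
    qed
    have ev: "\<forall>n. norm (L (W n) - L q) \<le> \<bar>K\<bar> * norm (W n - q)" using bnd by blast
    have "(\<lambda>n. L (W n) - L q) \<longlonglongrightarrow> 0"
      using Lim_null_comparison[OF always_eventually[OF ev] lim0] .
    thus ?thesis by (simp only: LIM_zero_iff)
  qed
  hence "(\<lambda>n. \<phi> (W n)) \<longlonglongrightarrow> \<phi> q" unfolding \<phi>_def
    by (intro tendsto_intros Wq) auto
  moreover have "(\<lambda>n. d + 1 / Suc n) \<longlonglongrightarrow> d"
    using tendsto_add[OF tendsto_const LIMSEQ_Suc[OF lim_inverse_n']] by simp
  ultimately have "\<phi> q \<le> d"
    by (rule LIMSEQ_le) (use W(2) less_imp_le in blast)
  hence qmin: "\<phi> q \<le> \<phi> w" if "w \<in> M" for w using dle[OF that] by linarith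
  show ?thesis
  proof (intro bexI[OF _ qM] ballI)
    fix v assume vM: "v \<in> M"
    have "\<forall>t. 0 \<le> t * (q \<bullet> v - L v) + t\<^sup>2 * (norm v)\<^sup>2 / 2"
    proof
      fix t :: real
      have "q + t *\<^sub>R v \<in> M" using M vM qM subspace_add subspace_scale by blast
      hence "\<phi> q \<le> \<phi> (q + t *\<^sub>R v)" using qmin by blast
      moreover have "L (q + t *\<^sub>R v) = L q + t * L v"
      proof -
        have "t *\<^sub>R v \<in> M" using M vM subspace_scale by blast
        hence "L (q + t *\<^sub>R v) = L q + L (t *\<^sub>R v)" using Ladd qM by blast
        thus ?thesis using Lsc[OF vM] by simp
      qed
      ultimately show "0 \<le> t * (q \<bullet> v - L v) + t\<^sup>2 * (norm v)\<^sup>2 / 2" unfolding \<phi>_def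
        using norm_add_scale_sq[of q t v] by (simp add: algebra_simps)
    qed
    from quad_nonneg_coef[OF this] show "L v = q \<bullet> v" by simp
  qed
qed




lemma bounded_real_subseq_conv:
  fixes X :: "nat \<Rightarrow> real"
  assumes "\<And>n. \<bar>X n\<bar> \<le> B"
  shows "\<exists>r. strict_mono r \<and> convergent (X \<circ> r)"
proof -
  obtain r where r: "strict_mono r" "monoseq (\<lambda>n. X (r n))" using seq_monosub by blast
  have "Bseq (\<lambda>n. X (r n))" using assms by (intro BseqI'[where K=B]) auto
  hence "convergent (\<lambda>n. X (r n))" using r(2) Bseq_monoseq_convergent by blast
  thus ?thesis using r(1) by (auto simp: o_def)
qed

lemma weak_compact:
  fixes u :: "nat \<Rightarrow> 'a::{real_inner,complete_space}"
  assumes bnd: "\<And>n. norm (u n) \<le> K"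
  shows "\<exists>r q. strict_mono r \<and> q \<in> closure (span (range u)) \<and> weak_conv (u \<circ> r) q"
proof -
  define P where "P = (\<lambda>j (s::nat\<Rightarrow>nat). convergent (\<lambda>k. u (s k) \<bullet> u j))"
  interpret subseqs P
  proof
    fix j and s :: "nat \<Rightarrow> nat" assume "strict_mono s"
    have "\<bar>u (s k) \<bullet> u j\<bar> \<le> K * norm (u j)" for k
    proof -
      have "\<bar>u (s k) \<bullet> u j\<bar> \<le> norm (u (s k)) * norm (u j)" by (rule Cauchy_Schwarz_ineq2)
      also have "\<dots> \<le> K * norm (u j)" using bnd by (intro mult_right_mono) auto
      finally show ?thesis .
    qed
    then obtain r where "strict_mono r" "convergent ((\<lambda>k. u (s k) \<bullet> u j) \<circ> r)"
      using bounded_real_subseq_conv[of "\<lambda>k. u (s k) \<bullet> u j"] by blast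
    thus "\<exists>r'. strict_mono r' \<and> P j (s \<circ> r')" unfolding P_def by (auto simp: o_def)
  qed
  define r where "r = diagseq"
  have r: "strict_mono r" unfolding r_def by (rule subseq_diagseq)
  define w where "w k = u (r k)" for k
  have convj: "convergent (\<lambda>k. w k \<bullet> u j)" for j
  proof -
    have "P j (diagseq \<circ> (+) (Suc j))"
    proof (rule diagseq_holds)
      fix r s n assume "strict_mono (r::nat\<Rightarrow>nat)" "P n s"
      thus "P n (s \<circ> r)" unfolding P_def using convergent_subseq_convergent[of "\<lambda>k. u (s k) \<bullet> u n" r]
        by (simp add: o_def)
    qed
    hence "convergent (\<lambda>k. u (diagseq (k + Suc j)) \<bullet> u j)" unfolding P_def by (simp add: o_def add.commute)
    hence "convergent (\<lambda>k. u (diagseq k) \<bullet> u j)" by (rule convergent_ignore_initial_segment[THEN iffD1])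
    thus ?thesis unfolding w_def r_def .
  qed
  define S where "S = span (range u)"
  define M where "M = closure S"
  have SM: "S \<subseteq> M" unfolding M_def by (rule closure_subset)
  have Msub: "subspace M" unfolding M_def S_def by (intro subspace_closure_my subspace_span)
  have Mcl: "closed M" unfolding M_def by simp
  have wM: "w k \<in> M" for k using SM unfolding S_def w_def by (auto intro: span_base)
  have convS: "convergent (\<lambda>k. w k \<bullet> v)" if "v \<in> S" for v
  proof -
    have "v \<in> span (range u)" using that unfolding S_def .
    thus ?thesis
    proof (induct rule: span_induct)
      case base
      have a: "convergent (\<lambda>k. w k \<bullet> 0)" using convergent_const[of "0::real"] by simp
      have b: "convergent (\<lambda>k. w k \<bullet> (x + y))" if "convergent (\<lambda>k. w k \<bullet> x)" "convergent (\<lambda>k. w k \<bullet> y)" for x y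
        using convergent_add[OF that] by (simp add: inner_add_right)
      have c: "convergent (\<lambda>k. w k \<bullet> (c *\<^sub>R x))" if cx: "convergent (\<lambda>k. w k \<bullet> x)" for c x
      proof -
        obtain l where "(\<lambda>k. w k \<bullet> x) \<longlonglongrightarrow> l" using cx by (auto simp: convergent_def)
        hence "(\<lambda>k. c * (w k \<bullet> x)) \<longlonglongrightarrow> c * l" by (rule tendsto_mult_left)
        thus ?thesis by (auto simp: convergent_def)
      qed
      show ?case unfolding subspace_def using a b c by auto
    next
      case (step x)
      then obtain j where "x = u j" by auto
      thus ?case using convj by simp
    qed
  qed
  have wbnd: "\<bar>w k \<bullet> v\<bar> \<le> \<bar>K\<bar> * norm v" for k v
  proof -
    have "\<bar>w k \<bullet> v\<bar> \<le> norm (w k) * norm v" by (rule Cauchy_Schwarz_ineq2)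
    also have "\<dots> \<le> \<bar>K\<bar> * norm v" using bnd[of "r k"] unfolding w_def by (intro mult_right_mono) auto
    finally show ?thesis .
  qed
  have convM: "convergent (\<lambda>k. w k \<bullet> v)" if vM: "v \<in> M" for v
  proof -
    have "Cauchy (\<lambda>k. w k \<bullet> v)"
    proof (rule CauchyI)
      fix e :: real assume e: "0 < e"
      define e' where "e' = e / (3 * (\<bar>K\<bar> + 1))"
      have e': "0 < e'" unfolding e'_def using e by (simp add: add_pos_nonneg)
      obtain s where s: "s \<in> S" "dist s v < e'" using vM e' unfolding M_def closure_approachable by blast
      have "Cauchy (\<lambda>k. w k \<bullet> s)" using convS[OF s(1)] Cauchy_convergent_iff by blast
      then obtain N where N: "\<forall>a\<ge>N. \<forall>b\<ge>N. norm (w a \<bullet> s - w b \<bullet> s) < e / 3"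
        using e CauchyD[of "\<lambda>k. w k \<bullet> s" "e/3"] by auto
      have close: "\<bar>w k \<bullet> v - w k \<bullet> s\<bar> < e / 3" for k
      proof -
        have "\<bar>w k \<bullet> v - w k \<bullet> s\<bar> = \<bar>w k \<bullet> (v - s)\<bar>" by (simp add: inner_diff_right)
        also have "\<dots> \<le> \<bar>K\<bar> * norm (v - s)" by (rule wbnd)
        also have "\<dots> \<le> \<bar>K\<bar> * e'" using s(2) by (intro mult_left_mono) (auto simp: dist_norm norm_minus_commute)
        also have "\<bar>K\<bar> * e' < e / 3" unfolding e'_def using e
          by (simp add: field_simps)
        finally show ?thesis .
      qed
      show "\<exists>N. \<forall>a\<ge>N. \<forall>b\<ge>N. norm (w a \<bullet> v - w b \<bullet> v) < e"
      proof (intro exI allI impI)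
        fix a b assume "N \<le> a" "N \<le> b"
        hence "\<bar>w a \<bullet> s - w b \<bullet> s\<bar> < e / 3" using N by auto
        with close[of a] close[of b] show "norm (w a \<bullet> v - w b \<bullet> v) < e" unfolding real_norm_def by linarith
      qed
    qed
    thus ?thesis using Cauchy_convergent_iff by blast
  qed
  define L where "L v = lim (\<lambda>k. w k \<bullet> v)" for v
  have Llim: "(\<lambda>k. w k \<bullet> v) \<longlonglongrightarrow> L v" if "v \<in> M" for v
    unfolding L_def using convM[OF that] convergent_LIMSEQ_iff by blast
  obtain q where qM: "q \<in> M" and q: "\<forall>v\<in>M. L v = q \<bullet> v"
  proof -
    have "\<exists>q\<in>M. \<forall>v\<in>M. L v = q \<bullet> v"
    proof (rule riesz_sub[OF Msub Mcl])
      fix x y assume "x \<in> M" "y \<in> M"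
      hence "(\<lambda>k. w k \<bullet> x + w k \<bullet> y) \<longlonglongrightarrow> L x + L y" using Llim tendsto_add by blast
      moreover have "x + y \<in> M" using \<open>x \<in> M\<close> \<open>y \<in> M\<close> Msub subspace_add by blast
      ultimately show "L (x + y) = L x + L y" using Llim LIMSEQ_unique by (fastforce simp: inner_add_right)
    next
      fix c :: real and x assume "x \<in> M"
      hence "(\<lambda>k. c * (w k \<bullet> x)) \<longlonglongrightarrow> c * L x" using Llim tendsto_mult_left by blast
      moreover have "c *\<^sub>R x \<in> M" using \<open>x \<in> M\<close> Msub subspace_scale by blast
      ultimately show "L (c *\<^sub>R x) = c * L x" using Llim LIMSEQ_unique by (fastforce simp: inner_scaleR_right)
    next
      fix x assume xM: "x \<in> M"
      have "(\<lambda>k. \<bar>w k \<bullet> x\<bar>) \<longlonglongrightarrow> \<bar>L x\<bar>" using Llim[OF xM] by (rule tendsto_rabs)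
      thus "\<bar>L x\<bar> \<le> \<bar>K\<bar> * norm x" using wbnd by (intro LIMSEQ_le_const2) auto
    qed
    thus ?thesis using that by blast
  qed
  show ?thesis
  proof (intro exI conjI)
    show "strict_mono r" by (rule r)
    show "q \<in> closure (span (range u))" using qM unfolding M_def S_def .
    show "weak_conv (u \<circ> r) q" unfolding weak_conv_def
    proof
      fix v
      obtain pv where pvM: "pv \<in> M" and pv: "\<forall>x\<in>M. v \<bullet> x = pv \<bullet> x"
      proof -
        have "\<exists>pv\<in>M. \<forall>x\<in>M. v \<bullet> x = pv \<bullet> x"
          by (rule riesz_sub[OF Msub Mcl, where K="norm v"])
             (auto simp: inner_add_right Cauchy_Schwarz_ineq2)
        thus ?thesis using that by blast
      qed
      have "(\<lambda>k. w k \<bullet> pv) \<longlonglongrightarrow> q \<bullet> pv" using Llim[OF pvM] q pvM by simp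
      moreover have "w k \<bullet> pv = w k \<bullet> v" for k using pv wM[of k] by (metis inner_commute)
      moreover have "q \<bullet> pv = q \<bullet> v" using pv qM by (metis inner_commute)
      ultimately show "(\<lambda>n. (u \<circ> r) n \<bullet> v) \<longlonglongrightarrow> q \<bullet> v" unfolding w_def by (simp add: o_def)
    qed
  qed
qed




definition psc :: "real \<Rightarrow> (nat \<Rightarrow> 'a) \<Rightarrow> (nat \<Rightarrow> 'a::real_vector)" where
  "psc c x = (\<lambda>i. c *\<^sub>R x i)"

lemma psc_apply[simp]: "psc c x i = c *\<^sub>R x i" by (simp add: psc_def)

definition pn :: "nat \<Rightarrow> (nat \<Rightarrow> 'a::real_inner) \<Rightarrow> real" where
  "pn m x = sqrt (pnormsq m x)"

lemma pinner_commute: "pinner m x y = pinner m y x"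
  by (simp add: pinner_def inner_commute)

lemma pinner_add_left: "pinner m (x + y) z = pinner m x z + pinner m y z"
  by (simp add: pinner_def inner_add_left sum.distrib)
lemma pinner_add_right: "pinner m z (x + y) = pinner m z x + pinner m z y"
  by (simp add: pinner_def inner_add_right sum.distrib)
lemma pinner_diff_left: "pinner m (x - y) z = pinner m x z - pinner m y z"
  by (simp add: pinner_def inner_diff_left sum_subtractf)
lemma pinner_diff_right: "pinner m z (x - y) = pinner m z x - pinner m z y"
  by (simp add: pinner_def inner_diff_right sum_subtractf)
lemma pinner_psc_left: "pinner m (psc c x) z = c * pinner m x z"
  by (simp add: pinner_def sum_distrib_left)
lemma pinner_psc_right: "pinner m z (psc c x) = c * pinner m z x"
  by (simp add: pinner_def sum_distrib_left)
lemma pinner_uminus_left: "pinner m (- x) z = - pinner m x z"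
  by (simp add: pinner_def sum_negf)
lemma pinner_uminus_right: "pinner m z (- x) = - pinner m z x"
  by (simp add: pinner_def sum_negf)

lemmas pinner_simps = pinner_add_left pinner_add_right pinner_diff_left pinner_diff_right
  pinner_psc_left pinner_psc_right pinner_uminus_left pinner_uminus_right

lemma pnormsq_pinner: "pnormsq m x = pinner m x x"
  by (simp add: pnormsq_def pinner_def power2_norm_eq_inner)

lemma pnormsq_nonneg: "0 \<le> pnormsq m x"
  by (simp add: pnormsq_def sum_nonneg)

lemma pn_nonneg: "0 \<le> pn m x" using pnormsq_nonneg[of m x] by (simp add: pn_def)

lemma pn_sq: "(pn m x)\<^sup>2 = pnormsq m x"
  using pnormsq_nonneg[of m x] by (simp add: pn_def)

lemma pn_L2: "pn m x = L2_set (\<lambda>i. norm (x i)) {1..m}"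
  by (simp add: pn_def pnormsq_def L2_set_def)

lemma pinner_cong: "(\<And>i. i \<in> {1..m} \<Longrightarrow> x i = x' i) \<Longrightarrow> (\<And>i. i \<in> {1..m} \<Longrightarrow> y i = y' i)
  \<Longrightarrow> pinner m x y = pinner m x' y'"
  by (simp add: pinner_def)

lemma pnormsq_cong: "(\<And>i. i \<in> {1..m} \<Longrightarrow> x i = x' i) \<Longrightarrow> pnormsq m x = pnormsq m x'"
  by (simp add: pnormsq_def)

lemma pn_cong: "(\<And>i. i \<in> {1..m} \<Longrightarrow> x i = x' i) \<Longrightarrow> pn m x = pn m x'"
  by (simp add: pn_def pnormsq_def)

lemma pinner_le: "\<bar>pinner m x y\<bar> \<le> pn m x * pn m y"
proof -
  have "\<bar>pinner m x y\<bar> \<le> (\<Sum>i\<in>{1..m}. \<bar>x i \<bullet> y i\<bar>)" unfolding pinner_def by (rule sum_abs)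
  also have "\<dots> \<le> (\<Sum>i\<in>{1..m}. \<bar>norm (x i)\<bar> * \<bar>norm (y i)\<bar>)"
    by (intro sum_mono) (simp add: Cauchy_Schwarz_ineq2)
  also have "\<dots> \<le> pn m x * pn m y" unfolding pn_L2 by (rule L2_set_mult_ineq)
  finally show ?thesis .
qed

lemma pinner_le': "pinner m x y \<le> pn m x * pn m y"
  using pinner_le[of m x y] by linarith

lemma pn_triangle: "pn m (x + y) \<le> pn m x + pn m y"
proof -
  have "pn m (x + y) \<le> L2_set (\<lambda>i. norm (x i) + norm (y i)) {1..m}"
    unfolding pn_L2 by (intro L2_set_mono) (auto simp: norm_triangle_ineq)
  also have "\<dots> \<le> pn m x + pn m y" unfolding pn_L2 by (rule L2_set_triangle_ineq)
  finally show ?thesis .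
qed

lemma pn_diff_triangle: "pn m (x - y) \<le> pn m x + pn m y"
proof -
  have "pn m (x - y) \<le> L2_set (\<lambda>i. norm (x i) + norm (y i)) {1..m}"
    unfolding pn_L2 by (intro L2_set_mono) (auto simp: norm_triangle_ineq4)
  also have "\<dots> \<le> pn m x + pn m y" unfolding pn_L2 by (rule L2_set_triangle_ineq)
  finally show ?thesis .
qed

lemma pn_psc: "pn m (psc c x) = \<bar>c\<bar> * pn m x"
  unfolding pn_def pnormsq_def
  by (simp add: power_mult_distrib sum_distrib_left[symmetric] real_sqrt_mult)

lemma pn_minus_commute: "pn m (x - y) = pn m (y - x)"
  unfolding pn_def pnormsq_def by (simp add: norm_minus_commute)

lemma norm_le_pn: "i \<in> {1..m} \<Longrightarrow> norm (x i) \<le> pn m x"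
  unfolding pn_L2 by (rule member_le_L2_set) auto

lemma pn_le_sum: "pn m x \<le> (\<Sum>i\<in>{1..m}. norm (x i))"
  unfolding pn_L2 by (rule L2_set_le_sum) auto

lemma pn_zero_iff: "pn m x = 0 \<longleftrightarrow> (\<forall>i\<in>{1..m}. x i = 0)"
  unfolding pn_def pnormsq_def by (simp add: sum_nonneg_eq_0_iff)

lemma PH_eqI: "x \<in> PH m H \<Longrightarrow> y \<in> PH m H \<Longrightarrow> pn m (x - y) = 0 \<Longrightarrow> x = y"
  unfolding pn_zero_iff PH_def by (auto simp: fun_eq_iff)

lemma PH_add: "\<forall>i\<in>{1..m}. subspace (H i) \<Longrightarrow> x \<in> PH m H \<Longrightarrow> y \<in> PH m H \<Longrightarrow> x + y \<in> PH m H"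
  unfolding PH_def by (auto intro: subspace_add)
lemma PH_diff: "\<forall>i\<in>{1..m}. subspace (H i) \<Longrightarrow> x \<in> PH m H \<Longrightarrow> y \<in> PH m H \<Longrightarrow> x - y \<in> PH m H"
  unfolding PH_def by (auto intro: subspace_diff)
lemma PH_psc: "\<forall>i\<in>{1..m}. subspace (H i) \<Longrightarrow> x \<in> PH m H \<Longrightarrow> psc c x \<in> PH m H"
  unfolding PH_def by (auto intro: subspace_scale)




locale tseng =
  fixes m :: nat
    and H :: "nat \<Rightarrow> 'a::{real_inner, complete_space} set"
    and f :: "(nat \<Rightarrow> 'a) \<Rightarrow> ereal"
    and g :: "nat \<Rightarrow> (nat \<Rightarrow> 'a) \<Rightarrow> real"
    and G :: "nat \<Rightarrow> (nat \<Rightarrow> 'a) \<Rightarrow> 'a"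
    and z :: "nat \<Rightarrow> 'a"
    and chi eps :: real
    and \<gamma> :: "nat \<Rightarrow> real"
    and a b c :: "nat \<Rightarrow> nat \<Rightarrow> 'a"
    and x y p q :: "nat \<Rightarrow> nat \<Rightarrow> 'a"
  assumes m: "m \<ge> 2"
    and H_sub: "\<forall>i\<in>{1..m}. subspace (H i) \<and> closed (H i)"
    and f_Gamma0: "Gamma0 m H f"
    and g_convex: "\<forall>xx\<in>PH m H. \<forall>i\<in>{1..m}. convex_on (H i) (\<lambda>v. g i (xx(i := v)))"
    and G_in: "\<forall>xx\<in>PH m H. \<forall>i\<in>{1..m}. G i xx \<in> H i"
    and G_deriv: "\<forall>xx\<in>PH m H. \<forall>i\<in>{1..m}.
        ((\<lambda>v. g i (xx(i := v))) has_derivative (\<lambda>h. G i xx \<bullet> h)) (at (xx i) within H i)"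
    and G_mono: "\<forall>xx\<in>PH m H. \<forall>yy\<in>PH m H.
        0 \<le> (\<Sum>i\<in>{1..m}. (G i xx - G i yy) \<bullet> (xx i - yy i))"
    and z_zero: "z \<in> PH m H"
        "(\<lambda>i. if i \<in> {1..m} then - G i z else 0) \<in> subdiff m H f z"
    and chi_pos: "0 < chi"
    and G_lip: "\<forall>xx\<in>PH m H. \<forall>yy\<in>PH m H.
        (\<Sum>i\<in>{1..m}. (norm (G i xx - G i yy))\<^sup>2) \<le> chi\<^sup>2 * (\<Sum>i\<in>{1..m}. (norm (xx i - yy i))\<^sup>2)"
    and eps_pos: "0 < eps" "eps < 1 / (chi + 1)"
    and gamma: "\<forall>n. eps \<le> \<gamma> n \<and> \<gamma> n \<le> (1 - eps) / chi"
    and x0: "x 0 \<in> PH m H"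
    and abc: "\<forall>i\<in>{1..m}. (\<forall>n. a n i \<in> H i \<and> b n i \<in> H i \<and> c n i \<in> H i)
        \<and> summable (\<lambda>n. norm (a n i)) \<and> summable (\<lambda>n. norm (b n i)) \<and> summable (\<lambda>n. norm (c n i))"
    and y_def: "\<forall>n. y n = (\<lambda>i. if i \<in> {1..m} then x n i - \<gamma> n *\<^sub>R (G i (x n) + a n i) else 0)"
    and p_def: "\<forall>n. p n = (\<lambda>i. if i \<in> {1..m}
        then prox m H (\<lambda>w. ereal (\<gamma> n) * f w) (y n) i + b n i else 0)"
    and q_def: "\<forall>n. q n = (\<lambda>i. if i \<in> {1..m} then p n i - \<gamma> n *\<^sub>R (G i (p n) + c n i) else 0)"
    and x_def: "\<forall>n. x (Suc n) = (\<lambda>i. if i \<in> {1..m} then x n i - y n i + q n i else 0)"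
begin

definition Bop :: "(nat \<Rightarrow> 'a) \<Rightarrow> (nat \<Rightarrow> 'a)" where
  "Bop xx = (\<lambda>i. if i \<in> {1..m} then G i xx else 0)"

definition issub :: "(nat \<Rightarrow> 'a) \<Rightarrow> (nat \<Rightarrow> 'a) \<Rightarrow> bool" where
  "issub pp u \<longleftrightarrow> pp \<in> PH m H \<and> f pp \<noteq> \<infinity> \<and> f pp \<noteq> -\<infinity> \<and>
     (\<forall>w\<in>PH m H. f pp + ereal (pinner m u (w - pp)) \<le> f w)"

definition J :: "real \<Rightarrow> (nat \<Rightarrow> 'a) \<Rightarrow> (nat \<Rightarrow> 'a)" where
  "J lam yy = prox m H (\<lambda>w. ereal lam * f w) yy"

definition fr :: "(nat \<Rightarrow> 'a) \<Rightarrow> real" where "fr w = real_of_ereal (f w)"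

lemma Hsub: "\<forall>i\<in>{1..m}. subspace (H i)" using H_sub by blast

lemma Hcl: "i \<in> {1..m} \<Longrightarrow> closed (H i)" using H_sub by blast

lemma f_notminf: "w \<in> PH m H \<Longrightarrow> f w \<noteq> -\<infinity>"
  using f_Gamma0 unfolding Gamma0_def proper_on_def by blast

lemma f_fin: "w \<in> PH m H \<Longrightarrow> f w \<noteq> \<infinity> \<Longrightarrow> f w = ereal (fr w)"
  using f_notminf[of w] unfolding fr_def by (cases "f w") auto

lemma f_dom_ne: "\<exists>w\<in>PH m H. f w \<noteq> \<infinity>"
  using f_Gamma0 unfolding Gamma0_def proper_on_def by blast

lemma f_conv: "xx \<in> PH m H \<Longrightarrow> yy \<in> PH m H \<Longrightarrow> 0 < t \<Longrightarrow> t < 1 \<Longrightarrow>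
   f (\<lambda>i. t *\<^sub>R xx i + (1 - t) *\<^sub>R yy i) \<le> ereal t * f xx + ereal (1 - t) * f yy"
  using f_Gamma0 unfolding Gamma0_def econvex_on_def by blast

lemma f_lsc: "(\<forall>k. X k \<in> PH m H) \<Longrightarrow> xx \<in> PH m H \<Longrightarrow>
       (\<lambda>k. pnormsq m (X k - xx)) \<longlonglongrightarrow> 0 \<Longrightarrow> f xx \<le> liminf (\<lambda>k. f (X k))"
  using f_Gamma0 unfolding Gamma0_def lsc_on_def by blast

lemma PH_conv: "xx \<in> PH m H \<Longrightarrow> yy \<in> PH m H \<Longrightarrow> (\<lambda>i. t *\<^sub>R xx i + (1 - t) *\<^sub>R yy i) \<in> PH m H"
  using Hsub unfolding PH_def by (auto intro!: subspace_add subspace_scale)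

lemma Bop_PH: "xx \<in> PH m H \<Longrightarrow> Bop xx \<in> PH m H"
  using G_in unfolding Bop_def PH_def by auto

lemma B_mono: "xx \<in> PH m H \<Longrightarrow> yy \<in> PH m H \<Longrightarrow> 0 \<le> pinner m (Bop xx - Bop yy) (xx - yy)"
  using G_mono unfolding pinner_def Bop_def by auto

lemma B_lip: "xx \<in> PH m H \<Longrightarrow> yy \<in> PH m H \<Longrightarrow> pn m (Bop xx - Bop yy) \<le> chi * pn m (xx - yy)"
proof -
  assume a: "xx \<in> PH m H" "yy \<in> PH m H"
  have "pnormsq m (Bop xx - Bop yy) \<le> chi\<^sup>2 * pnormsq m (xx - yy)"
    using G_lip a unfolding pnormsq_def Bop_def by auto
  hence "sqrt (pnormsq m (Bop xx - Bop yy)) \<le> sqrt (chi\<^sup>2 * pnormsq m (xx - yy))"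
    by (rule real_sqrt_le_mono)
  thus ?thesis unfolding pn_def using chi_pos by (simp add: real_sqrt_mult)
qed

lemma sub_mono:
  assumes "issub p1 u1" "issub p2 u2"
  shows "0 \<le> pinner m (u1 - u2) (p1 - p2)"
proof -
  have p: "p1 \<in> PH m H" "p2 \<in> PH m H" using assms unfolding issub_def by auto
  have e1: "f p1 = ereal (fr p1)" "f p2 = ereal (fr p2)" using assms f_fin unfolding issub_def by auto
  have "f p1 + ereal (pinner m u1 (p2 - p1)) \<le> f p2" using assms(1) p unfolding issub_def by blast
  hence 1: "fr p1 + pinner m u1 (p2 - p1) \<le> fr p2" using e1 by simp
  have "f p2 + ereal (pinner m u2 (p1 - p2)) \<le> f p1" using assms(2) p unfolding issub_def by blast
  hence 2: "fr p2 + pinner m u2 (p1 - p2) \<le> fr p1" using e1 by simp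
  have "pinner m (u1 - u2) (p1 - p2) = - pinner m u1 (p2 - p1) - pinner m u2 (p1 - p2)"
    by (simp add: pinner_simps)
  thus ?thesis using 1 2 by linarith
qed

lemma z_sub: "issub z (\<lambda>i. - G i z)"
proof -
  have "pinner m (\<lambda>i. if i \<in> {1..m} then - G i z else 0) w = pinner m (\<lambda>i. - G i z) w" for w
    by (rule pinner_cong) auto
  thus ?thesis using z_zero unfolding subdiff_def issub_def by auto
qed

end



lemma eps_aux:
  fixes A B C :: real
  assumes h: "\<And>t. 0 < t \<Longrightarrow> t < 1 \<Longrightarrow> A \<le> B + t * C" and C: "0 \<le> C"
  shows "A \<le> B"
proof (rule ccontr)
  assume "\<not> A \<le> B"
  hence AB: "0 < A - B" by simp
  define t where "t = min (1/2) ((A - B) / (2*(C+1)))"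
  have t0: "0 < t" unfolding t_def using AB C by simp
  have t1: "t < 1" unfolding t_def by simp
  have "t * C \<le> t * (C + 1)" using t0 by simp
  also have "\<dots> \<le> (A - B) / (2*(C+1)) * (C + 1)" unfolding t_def using C by (intro mult_right_mono) auto
  also have "\<dots> = (A - B) / 2"
  proof -
    have "C + 1 \<noteq> 0" using C by simp
    thus ?thesis by (simp add: field_simps)
  qed
  finally have tc: "t * C \<le> (A - B) / 2" .
  have "(A - B) / 2 < A - B" using AB by simp
  hence "t * C < A - B" using tc by linarith
  thus False using h[OF t0 t1] by linarith
qed

lemma pnormsq_le_pn: "pnormsq m x \<le> pnormsq m y \<longleftrightarrow> pn m x \<le> pn m y"
  unfolding pn_def using pnormsq_nonneg by simp

lemma norm_sq_le_pnormsq: "i \<in> {1..m} \<Longrightarrow> (norm (x i))\<^sup>2 \<le> pnormsq m x"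
proof -
  assume i: "i \<in> {1..m}"
  have "(norm (x i))\<^sup>2 \<le> (pn m x)\<^sup>2" using norm_le_pn[OF i, of x] by (intro power_mono) auto
  thus ?thesis by (simp add: pn_sq)
qed

lemma pnormsq_diff_psc: "pnormsq m (D - psc t E) = pnormsq m D - 2 * t * pinner m D E + t\<^sup>2 * pnormsq m E"
  unfolding pnormsq_pinner
  by (simp add: pinner_simps pinner_commute[of m E D] algebra_simps power2_eq_square)

lemma lin_aux2:
  fixes X P Q d e1 e2 :: real
  assumes "X / 8 \<le> (P + Q) / 2 - d" "P < d + e1" "Q < d + e2"
  shows "X \<le> 4 * (e1 + e2)"
proof -
  have "X \<le> 4 * P + 4 * Q - 8 * d" using assms(1) by (simp add: field_simps)
  hence "X \<le> 4 * e1 + 4 * e2" using assms(2,3) by linarith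
  thus ?thesis by (simp add: distrib_left)
qed

lemma lin_aux3:
  fixes c P1 P2 X :: real
  assumes "c \<le> (P1 + P2) / 2 - X / 8" "P1 \<le> P2" "P2 \<le> P1" "P1 \<le> c"
  shows "X \<le> 0"
proof -
  have "8 * c \<le> 4 * P1 + 4 * P2 - X" using assms(1) by (simp add: field_simps)
  thus ?thesis using assms(2-4) by linarith
qed

context tseng begin

lemma fr_le: "w \<in> PH m H \<Longrightarrow> f w \<le> ereal r \<Longrightarrow> fr w \<le> r"
proof -
  assume a: "w \<in> PH m H" "f w \<le> ereal r"
  hence "f w \<noteq> \<infinity>" by auto
  hence "f w = ereal (fr w)" using f_fin a(1) by blast
  thus ?thesis using a(2) by simp
qed

lemma fr_ge: "w \<in> PH m H \<Longrightarrow> f w \<noteq> \<infinity> \<Longrightarrow> ereal r \<le> f w \<Longrightarrow> r \<le> fr w"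
proof -
  assume a: "w \<in> PH m H" "f w \<noteq> \<infinity>" "ereal r \<le> f w"
  hence "f w = ereal (fr w)" using f_fin by blast
  thus ?thesis using a(3) by simp
qed

lemma ereal_fr_le: "w \<in> PH m H \<Longrightarrow> f w \<noteq> \<infinity> \<Longrightarrow> fr w \<le> r \<Longrightarrow> f w \<le> ereal r"
proof -
  assume a: "w \<in> PH m H" "f w \<noteq> \<infinity>" "fr w \<le> r"
  hence "f w = ereal (fr w)" using f_fin by blast
  thus ?thesis using a(3) by simp
qed

lemma prox_props:
  assumes lam: "0 < lam" and yy: "yy \<in> PH m H"
  shows "J lam yy \<in> PH m H \<and> issub (J lam yy) (psc (1/lam) (yy - J lam yy))"
proof -
  define Pr where "Pr pp \<longleftrightarrow> pp \<in> PH m H \<and> (\<forall>w\<in>PH m H. ereal lam * f pp + ereal (pnormsq m (yy - pp) / 2)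
        \<le> ereal lam * f w + ereal (pnormsq m (yy - w) / 2))" for pp
  define dom where "dom = {w\<in>PH m H. f w \<noteq> \<infinity>}"
  define \<Phi> where "\<Phi> w = lam * fr w + pnormsq m (yy - w) / 2" for w
  have \<Phi>e: "ereal lam * f w + ereal (pnormsq m (yy - w) / 2) = ereal (\<Phi> w)" if "w \<in> dom" for w
  proof -
    have "f w = ereal (fr w)" using f_fin that unfolding dom_def by auto
    thus ?thesis unfolding \<Phi>_def by simp
  qed
  have inf_case: "ereal lam * f w + ereal r = \<infinity>" if "f w = \<infinity>" for w r using lam that by simp
  have mid: "(\<lambda>i. (1/2) *\<^sub>R a i + (1 - 1/2) *\<^sub>R b i) \<in> dom \<and>
      \<Phi> (\<lambda>i. (1/2) *\<^sub>R a i + (1 - 1/2) *\<^sub>R b i) \<le> (\<Phi> a + \<Phi> b)/2 - pnormsq m (a - b) / 8"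
    if ab: "a \<in> dom" "b \<in> dom" for a b
  proof -
    define c where "c = (\<lambda>i. (1/2) *\<^sub>R a i + (1 - 1/2) *\<^sub>R b i)"
    have aPH: "a \<in> PH m H" and bPH: "b \<in> PH m H" using ab unfolding dom_def by auto
    have cPH: "c \<in> PH m H" unfolding c_def using PH_conv[OF aPH bPH] .
    have "f c \<le> ereal (1/2) * f a + ereal (1 - 1/2) * f b" unfolding c_def by (rule f_conv[OF aPH bPH]) auto
    also have "\<dots> = ereal ((fr a + fr b) / 2)"
    proof -
      have "f a = ereal (fr a)" "f b = ereal (fr b)" using f_fin ab unfolding dom_def by auto
      thus ?thesis by (simp add: add_divide_distrib)
    qed
    finally have fc: "f c \<le> ereal ((fr a + fr b) / 2)" .
    hence cdom: "c \<in> dom" using cPH unfolding dom_def by auto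
    have frc: "fr c \<le> (fr a + fr b) / 2" using fr_le[OF cPH fc] .
    have pq: "pnormsq m (yy - c) = pnormsq m (yy - a) / 2 + pnormsq m (yy - b) / 2 - pnormsq m (a - b) / 4"
    proof -
      have "(norm (yy i - c i))\<^sup>2 = (norm (yy i - a i))\<^sup>2 / 2 + (norm (yy i - b i))\<^sup>2 / 2 - (norm (a i - b i))\<^sup>2 / 4" for i
      proof -
        have "(1/2) *\<^sub>R ((yy i - a i) + (yy i - b i)) = yy i - c i" unfolding c_def by (simp add: algebra_simps scaleR_add_left[symmetric])
        moreover have "(yy i - a i) - (yy i - b i) = - (a i - b i)" by simp
        ultimately show ?thesis using parallelogram_half[of "yy i - a i" "yy i - b i"] by (simp only: norm_minus_cancel)
      qed
      thus ?thesis unfolding pnormsq_def by (simp add: sum.distrib sum_subtractf sum_divide_distrib)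
    qed
    have "\<Phi> c \<le> lam * ((fr a + fr b) / 2) + pnormsq m (yy - c) / 2"
      unfolding \<Phi>_def using frc lam by simp
    also have "\<dots> = (\<Phi> a + \<Phi> b)/2 - pnormsq m (a - b) / 8" unfolding pq \<Phi>_def by (simp add: field_simps)
    finally show ?thesis using cdom unfolding c_def by simp
  qed
  define u0 where "u0 = (\<lambda>i. - G i z)"
  define lb where "lb = lam * fr z + lam * pinner m u0 (yy - z) - (lam * pn m u0)\<^sup>2 / 2"
  have lbP: "lb \<le> \<Phi> w" if wd: "w \<in> dom" for w
  proof -
    have wPH: "w \<in> PH m H" using wd unfolding dom_def by auto
    have zs: "f z + ereal (pinner m u0 (w - z)) \<le> f w" using z_sub wPH unfolding issub_def u0_def by blast
    have fz: "f z = ereal (fr z)" using z_sub f_fin unfolding issub_def by auto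
    have "ereal (fr z + pinner m u0 (w - z)) \<le> f w" using zs fz by simp
    hence 1: "fr z + pinner m u0 (w - z) \<le> fr w" using fr_ge[OF wPH] wd unfolding dom_def by auto
    have 2: "pinner m u0 (w - z) = pinner m u0 (w - yy) + pinner m u0 (yy - z)" by (simp add: pinner_simps)
    have 3: "- (pn m u0 * pn m (yy - w)) \<le> pinner m u0 (w - yy)"
    proof -
      have "\<bar>pinner m u0 (w - yy)\<bar> \<le> pn m u0 * pn m (yy - w)"
        using pinner_le[of m u0 "w - yy"] pn_minus_commute[of m w yy] by simp
      thus ?thesis by linarith
    qed
    define s where "s = pn m (yy - w)"
    define cc where "cc = lam * pn m u0"
    have 4: "pnormsq m (yy - w) = s\<^sup>2" unfolding s_def by (simp add: pn_sq)
    have 5: "0 \<le> (s - cc)\<^sup>2 / 2" by simp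
    have "lam * (fr z + pinner m u0 (w - yy) + pinner m u0 (yy - z)) \<le> lam * fr w" using 1 2 lam by simp
    moreover have "lam * (- (pn m u0 * s)) \<le> lam * pinner m u0 (w - yy)" using 3 lam unfolding s_def
      by (intro mult_left_mono) auto
    ultimately have "lam * fr z - cc * s + lam * pinner m u0 (yy - z) \<le> lam * fr w"
      unfolding cc_def by (simp add: algebra_simps)
    thus ?thesis unfolding lb_def \<Phi>_def 4 using 5 unfolding cc_def[symmetric]
      by (simp add: power2_diff algebra_simps)
  qed
  obtain w0 where w0: "w0 \<in> dom" using f_dom_ne unfolding dom_def by blast
  have dom_ne: "dom \<noteq> {}" using w0 by blast
  define d where "d = Inf (\<Phi> ` dom)"
  have bdd: "bdd_below (\<Phi> ` dom)" by (rule bdd_belowI2[where m=lb], rule lbP)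
  have dle: "d \<le> \<Phi> w" if "w \<in> dom" for w unfolding d_def using bdd that by (simp add: cInf_lower)
  have "\<forall>n. \<exists>w\<in>dom. \<Phi> w < d + 1 / Suc n"
  proof
    fix n
    have "Inf (\<Phi> ` dom) < d + 1 / Suc n" unfolding d_def by simp
    then obtain v where "v \<in> \<Phi> ` dom" "v < d + 1 / Suc n" using dom_ne cInf_lessD[of "\<Phi> ` dom"] by blast
    thus "\<exists>w\<in>dom. \<Phi> w < d + 1 / Suc n" by blast
  qed
  then obtain W where W: "\<And>n. W n \<in> dom" "\<And>n. \<Phi> (W n) < d + 1 / Suc n" by metis
  have WPH: "W n \<in> PH m H" for n using W(1) unfolding dom_def by auto
  have Wc: "pnormsq m (W n - W k) \<le> 4 * (1 / Suc n + 1 / Suc k)" for n k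
  proof -
    have "d \<le> \<Phi> (\<lambda>i. (1/2) *\<^sub>R W n i + (1 - 1/2) *\<^sub>R W k i)" using mid[OF W(1) W(1)] dle by blast
    hence "pnormsq m (W n - W k) / 8 \<le> (\<Phi> (W n) + \<Phi> (W k))/2 - d" using mid[OF W(1) W(1), of n k] by linarith
    thus ?thesis using W(2)[of n] W(2)[of k] by (rule lin_aux2)
  qed
  have Wi: "(\<lambda>n. W n i) \<longlonglongrightarrow> lim (\<lambda>n. W n i)" if i: "i \<in> {1..m}" for i
  proof -
    have "Cauchy (\<lambda>n. W n i)"
    proof (rule cauchy_sq_bound)
      fix n k
      have "(norm (W n i - W k i))\<^sup>2 \<le> pnormsq m (W n - W k)"
        using norm_sq_le_pnormsq[OF i, of "W n - W k"] by simp
      thus "(norm (W n i - W k i))\<^sup>2 \<le> 4 * (1 / Suc n + 1 / Suc k)" using Wc[of n k] by linarith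
    qed
    thus ?thesis using Cauchy_convergent convergent_LIMSEQ_iff by blast
  qed
  define q where "q i = (if i \<in> {1..m} then lim (\<lambda>n. W n i) else 0)" for i
  have Wq: "(\<lambda>n. W n i) \<longlonglongrightarrow> q i" if "i \<in> {1..m}" for i using Wi[OF that] that unfolding q_def by simp
  have qPH: "q \<in> PH m H"
    unfolding PH_def
  proof (intro CollectI conjI ballI allI impI)
    fix i assume i: "i \<in> {1..m}"
    have "\<forall>n. W n i \<in> H i" using WPH i unfolding PH_def by auto
    thus "q i \<in> H i" using closed_sequentially[OF Hcl[OF i] _ Wq[OF i]] by blast
  next
    fix i assume "i \<notin> {1..m}" thus "q i = 0" unfolding q_def by auto
  qed
  have Wq0: "(\<lambda>n. pnormsq m (W n - q)) \<longlonglongrightarrow> 0"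
  proof -
    have "(\<lambda>n. \<Sum>i\<in>{1..m}. (norm (W n i - q i))\<^sup>2) \<longlonglongrightarrow> (\<Sum>i\<in>{1..m}. 0\<^sup>2)"
      by (intro tendsto_sum tendsto_power tendsto_norm_zero LIM_zero Wq) auto
    thus ?thesis unfolding pnormsq_def by simp
  qed
  have Wyq: "(\<lambda>n. pnormsq m (yy - W n)) \<longlonglongrightarrow> pnormsq m (yy - q)"
  proof -
    have "(\<lambda>n. \<Sum>i\<in>{1..m}. (norm (yy i - W n i))\<^sup>2) \<longlonglongrightarrow> (\<Sum>i\<in>{1..m}. (norm (yy i - q i))\<^sup>2)"
      by (intro tendsto_sum tendsto_power tendsto_norm tendsto_diff tendsto_const Wq) auto
    thus ?thesis unfolding pnormsq_def by simp
  qed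
  define R where "R n = (d + 1 / Suc n - pnormsq m (yy - W n) / 2) / lam" for n
  have RL0: "R \<longlonglongrightarrow> (d + 0 - pnormsq m (yy - q) / 2) / lam" unfolding R_def
    by (intro tendsto_divide tendsto_diff tendsto_add tendsto_const Wyq LIMSEQ_Suc[OF lim_inverse_n'] tendsto_divide) (use lam in auto)
  have RL: "R \<longlonglongrightarrow> (d - pnormsq m (yy - q) / 2) / lam" using RL0 by simp
  have fWR: "f (W n) \<le> ereal (R n)" for n
  proof -
    have "lam * fr (W n) < lam * R n" unfolding R_def using W(2)[of n] lam unfolding \<Phi>_def by simp
    hence "fr (W n) \<le> R n" using lam by simp
    thus ?thesis using ereal_fr_le[OF WPH] W(1)[of n] unfolding dom_def by auto
  qed
  have "f q \<le> liminf (\<lambda>k. f (W k))" by (rule f_lsc[OF _ qPH Wq0]) (use WPH in blast)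
  also have "\<dots> \<le> liminf (\<lambda>k. ereal (R k))" by (intro Liminf_mono always_eventually allI fWR)
  also have "\<dots> = ereal ((d - pnormsq m (yy - q) / 2) / lam)"
    by (intro lim_imp_Liminf trivial_limit_sequentially tendsto_ereal RL)
  finally have fq: "f q \<le> ereal ((d - pnormsq m (yy - q) / 2) / lam)" by simp
  hence qdom: "q \<in> dom" using qPH unfolding dom_def by auto
  have "fr q \<le> (d - pnormsq m (yy - q) / 2) / lam" using fr_le[OF qPH fq] .
  hence "lam * fr q \<le> d - pnormsq m (yy - q) / 2" using lam by (simp add: field_simps)
  hence \<Phi>q: "\<Phi> q \<le> d" unfolding \<Phi>_def by simp
  have exist: "Pr q" unfolding Pr_def
  proof (intro conjI qPH ballI)
    fix w assume wPH: "w \<in> PH m H"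
    show "ereal lam * f q + ereal (pnormsq m (yy - q) / 2) \<le> ereal lam * f w + ereal (pnormsq m (yy - w) / 2)"
    proof (cases "f w = \<infinity>")
      case True thus ?thesis using inf_case by simp
    next
      case False
      hence wd: "w \<in> dom" using wPH unfolding dom_def by auto
      show ?thesis unfolding \<Phi>e[OF qdom] \<Phi>e[OF wd] using \<Phi>q dle[OF wd] by simp
    qed
  qed
  have Pr_dom: "pp \<in> dom" if "Pr pp" for pp
  proof (rule ccontr)
    assume "pp \<notin> dom"
    hence "f pp = \<infinity>" using that unfolding Pr_def dom_def by auto
    moreover have "w0 \<in> PH m H" using w0 unfolding dom_def by auto
    ultimately show False using that inf_case[of pp] \<Phi>e[OF w0] unfolding Pr_def by fastforce
  qed
  have Pr_min: "\<Phi> pp \<le> \<Phi> w" if "Pr pp" "w \<in> dom" for pp w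
  proof -
    have "w \<in> PH m H" using that(2) unfolding dom_def by auto
    hence "ereal lam * f pp + ereal (pnormsq m (yy - pp) / 2) \<le> ereal lam * f w + ereal (pnormsq m (yy - w) / 2)"
      using that(1) unfolding Pr_def by blast
    thus ?thesis unfolding \<Phi>e[OF Pr_dom[OF that(1)]] \<Phi>e[OF that(2)] by simp
  qed
  have uniq: "p1 = p2" if "Pr p1" "Pr p2" for p1 p2
  proof -
    have d1: "p1 \<in> dom" and d2: "p2 \<in> dom" using Pr_dom that by auto
    have "\<Phi> p1 \<le> \<Phi> p2" "\<Phi> p2 \<le> \<Phi> p1" using Pr_min that d1 d2 by auto
    moreover note mid[OF d1 d2]
    moreover have "\<Phi> p1 \<le> \<Phi> (\<lambda>i. (1/2) *\<^sub>R p1 i + (1 - 1/2) *\<^sub>R p2 i)" using Pr_min that(1) mid[OF d1 d2] by blast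
    ultimately have "pnormsq m (p1 - p2) \<le> 0" using lin_aux3 by blast
    hence "pn m (p1 - p2) = 0" unfolding pn_def using pnormsq_nonneg[of m "p1 - p2"] by simp
    moreover have "p1 \<in> PH m H" "p2 \<in> PH m H" using that unfolding Pr_def by auto
    ultimately show ?thesis using PH_eqI by blast
  qed
  have Jeq: "J lam yy = (THE pp. Pr pp)" unfolding J_def prox_def Pr_def by (rule refl)
  have PrJ: "Pr (J lam yy)" unfolding Jeq by (rule theI[of Pr q, OF exist]) (rule uniq[OF _ exist])
  define pp where "pp = J lam yy"
  have ppPH: "pp \<in> PH m H" using PrJ unfolding Pr_def pp_def by auto
  have ppd: "pp \<in> dom" using Pr_dom PrJ unfolding pp_def by auto
  have fpp: "f pp = ereal (fr pp)" using f_fin ppPH ppd unfolding dom_def by auto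
  have "issub pp (psc (1/lam) (yy - pp))" unfolding issub_def
  proof (intro conjI ppPH ballI)
    show "f pp \<noteq> \<infinity>" "f pp \<noteq> -\<infinity>" using fpp by auto
    fix w assume wPH: "w \<in> PH m H"
    show "f pp + ereal (pinner m (psc (1 / lam) (yy - pp)) (w - pp)) \<le> f w"
    proof (cases "f w = \<infinity>")
      case True thus ?thesis by simp
    next
      case False
      hence wd: "w \<in> dom" using wPH unfolding dom_def by auto
      have fw: "f w = ereal (fr w)" using f_fin wPH False by auto
      define D2 where "D2 = pnormsq m (yy - pp)"
      define E2 where "E2 = pnormsq m (w - pp)"
      define de where "de = pinner m (yy - pp) (w - pp)"
      have E2nn: "0 \<le> E2" unfolding E2_def by (rule pnormsq_nonneg)
      have key: "lam * fr pp \<le> lam * fr w - de + t * (E2 / 2)" if t: "0 < t" "t < 1" for t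
      proof -
        define ct where "ct = (\<lambda>i. t *\<^sub>R w i + (1 - t) *\<^sub>R pp i)"
        have ctPH: "ct \<in> PH m H" unfolding ct_def using PH_conv[OF wPH ppPH] .
        have "f ct \<le> ereal t * f w + ereal (1 - t) * f pp" unfolding ct_def by (rule f_conv[OF wPH ppPH t])
        also have "\<dots> = ereal (t * fr w + (1 - t) * fr pp)" unfolding fw fpp by simp
        finally have fct: "f ct \<le> ereal (t * fr w + (1 - t) * fr pp)" .
        hence ctd: "ct \<in> dom" using ctPH unfolding dom_def by auto
        have frct: "fr ct \<le> t * fr w + (1 - t) * fr pp" using fr_le[OF ctPH fct] .
        have "yy - ct = (yy - pp) - psc t (w - pp)" unfolding ct_def by (simp add: fun_eq_iff algebra_simps)
        hence nct: "pnormsq m (yy - ct) = D2 - 2 * t * de + t\<^sup>2 * E2"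
          unfolding D2_def E2_def de_def by (simp only: pnormsq_diff_psc)
        have "\<Phi> pp \<le> \<Phi> ct" using Pr_min[OF PrJ ctd] unfolding pp_def .
        hence "lam * fr pp + D2 / 2 \<le> lam * fr ct + (D2 - 2 * t * de + t\<^sup>2 * E2) / 2"
          unfolding \<Phi>_def nct D2_def by simp
        also have "lam * fr ct \<le> lam * (t * fr w + (1 - t) * fr pp)" using frct lam by simp
        finally have X: "lam * fr pp + D2 / 2 \<le> lam * (t * fr w + (1 - t) * fr pp) + (D2 - 2 * t * de + t\<^sup>2 * E2) / 2"
          by linarith
        have "lam * (t * fr w + (1 - t) * fr pp) + (D2 - 2 * t * de + t\<^sup>2 * E2) / 2 - (lam * fr pp + D2 / 2)
            = t * (lam * fr w - lam * fr pp - de + t * E2 / 2)"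
          by (simp add: field_simps power2_eq_square)
        hence "0 \<le> t * (lam * fr w - lam * fr pp - de + t * E2 / 2)" using X by linarith
        hence "0 \<le> lam * fr w - lam * fr pp - de + t * E2 / 2" using t by (simp add: zero_le_mult_iff)
        thus ?thesis by simp
      qed
      have "lam * fr pp \<le> lam * fr w - de"
        by (rule eps_aux[OF key]) (use E2nn in auto)
      hence "fr pp + (1 / lam) * de \<le> fr w" using lam by (simp add: field_simps)
      thus ?thesis unfolding fpp fw de_def by (simp add: pinner_psc_left)
    qed
  qed
  thus ?thesis using ppPH unfolding pp_def by simp
qed

end



lemma convex_grad_ineq:
  fixes h :: "'a::real_inner \<Rightarrow> real"
  assumes cv: "convex_on S h" and S: "subspace S" and x0: "x0 \<in> S" and v: "v \<in> S"
    and der: "(h has_derivative (\<lambda>d. G0 \<bullet> d)) (at x0 within S)"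
  shows "h x0 + G0 \<bullet> (v - x0) \<le> h v"
proof (rule ccontr)
  assume ng: "\<not> ?thesis"
  define d where "d = v - x0"
  define gap where "gap = G0 \<bullet> d - (h v - h x0)"
  have gap: "0 < gap" using ng unfolding gap_def d_def by simp
  have dnz: "d \<noteq> 0"
  proof
    assume "d = 0"
    hence "v = x0" unfolding d_def by simp
    thus False using gap \<open>d = 0\<close> unfolding gap_def by simp
  qed
  have nd: "0 < norm d" using dnz by simp
  define e where "e = gap / (2 * norm d)"
  have e: "0 < e" unfolding e_def using gap nd by simp
  obtain \<delta> where \<delta>: "0 < \<delta>" and H: "\<forall>x'\<in>S. 0 < norm (x' - x0) \<and> norm (x' - x0) < \<delta> \<longrightarrow>
      norm (h x' - h x0 - G0 \<bullet> (x' - x0)) / norm (x' - x0) < e"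
    using der[unfolded has_derivative_within'] e by blast
  define t where "t = min (1/2) (\<delta> / (2 * norm d))"
  have t0: "0 < t" unfolding t_def using \<delta> nd by simp
  have t1: "t \<le> 1/2" unfolding t_def by simp
  have tn: "t * norm d \<le> \<delta> / 2"
  proof -
    have "t \<le> \<delta> / (2 * norm d)" unfolding t_def by simp
    hence "t * norm d \<le> \<delta> / (2 * norm d) * norm d" using nd by (intro mult_right_mono) auto
    thus ?thesis using nd by simp
  qed
  define x' where "x' = (1 - t) *\<^sub>R x0 + t *\<^sub>R v"
  have x'S: "x' \<in> S" unfolding x'_def using S x0 v by (intro subspace_add subspace_scale) auto
  have xd: "x' - x0 = t *\<^sub>R d" unfolding x'_def d_def by (simp add: algebra_simps)
  have nx: "norm (x' - x0) = t * norm d" using t0 xd by simp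
  have "0 < norm (x' - x0)" "norm (x' - x0) < \<delta>" using nx t0 nd tn \<delta> by auto
  hence "norm (h x' - h x0 - G0 \<bullet> (x' - x0)) / norm (x' - x0) < e" using H x'S by blast
  hence "\<bar>h x' - h x0 - t * (G0 \<bullet> d)\<bar> < e * (t * norm d)" using nx t0 nd xd by (simp add: field_simps)
  also have "e * (t * norm d) = t * gap / 2" unfolding e_def using nd by (simp add: field_simps)
  finally have A: "t * (G0 \<bullet> d) - t * gap / 2 < h x' - h x0" by linarith
  have "h x' \<le> (1 - t) * h x0 + t * h v" unfolding x'_def using cv t0 t1 x0 v by (intro convex_onD) auto
  hence B: "h x' - h x0 \<le> t * (G0 \<bullet> d) - t * gap" unfolding gap_def by (simp add: algebra_simps)
  have "t * gap < t * gap / 2" using A B by linarith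
  thus False using t0 gap by (simp add: field_simps)
qed

lemma quasi_fejer:
  fixes \<alpha> \<epsilon> :: "nat \<Rightarrow> real"
  assumes a0: "\<And>n. 0 \<le> \<alpha> n" and step: "\<And>n. \<alpha> (Suc n) \<le> \<alpha> n + \<epsilon> n"
    and sm: "summable \<epsilon>" and e0: "\<And>n. 0 \<le> \<epsilon> n"
  shows "convergent \<alpha>"
proof -
  define \<beta> where "\<beta> n = \<alpha> n - (\<Sum>k<n. \<epsilon> k)" for n
  have "\<beta> (Suc n) \<le> \<beta> n" for n unfolding \<beta>_def using step[of n] by simp
  hence dec: "decseq \<beta>" by (rule decseq_SucI)
  have S0: "0 \<le> suminf \<epsilon>" using sm e0 by (simp add: suminf_nonneg)
  have lo: "- suminf \<epsilon> \<le> \<beta> n" for n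
  proof -
    have "(\<Sum>k<n. \<epsilon> k) \<le> suminf \<epsilon>" using sm e0 by (intro sum_le_suminf) auto
    thus ?thesis unfolding \<beta>_def using a0[of n] by linarith
  qed
  have up: "\<beta> n \<le> \<alpha> 0" for n
  proof -
    have "\<beta> n \<le> \<beta> 0" using dec unfolding decseq_def by simp
    thus ?thesis unfolding \<beta>_def by simp
  qed
  have ab: "\<bar>\<beta> n\<bar> \<le> \<alpha> 0 + suminf \<epsilon>" for n
    using lo[of n] up[of n] a0[of 0] S0 unfolding abs_le_iff by linarith
  have "Bseq \<beta>"
    by (rule BseqI'[where K="\<alpha> 0 + suminf \<epsilon>"]) (use ab in simp)
  moreover have "monoseq \<beta>" using dec unfolding monoseq_def decseq_def by blast
  ultimately have cb: "convergent \<beta>" by (rule Bseq_monoseq_convergent)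
  have cs: "convergent (\<lambda>n. \<Sum>k<n. \<epsilon> k)" using summable_LIMSEQ[OF sm] convergent_def by blast
  have "convergent (\<lambda>n. \<beta> n + (\<Sum>k<n. \<epsilon> k))" by (rule convergent_add[OF cb cs])
  thus ?thesis unfolding \<beta>_def by simp
qed

lemma weak_conv_subseq: "weak_conv u q \<Longrightarrow> strict_mono r \<Longrightarrow> weak_conv (\<lambda>n. u (r n)) q"
  unfolding weak_conv_def using LIMSEQ_subseq_LIMSEQ by (fastforce simp: o_def)

lemma weak_conv_close:
  fixes u w :: "nat \<Rightarrow> 'a::real_inner"
  assumes "weak_conv u q" "(\<lambda>n. norm (u n - w n)) \<longlonglongrightarrow> 0"
  shows "weak_conv w q"
  unfolding weak_conv_def
proof
  fix v :: 'a
  have "(\<lambda>n. norm (u n - w n) * norm v) \<longlonglongrightarrow> 0" using tendsto_mult_left_zero[OF assms(2)] .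
  moreover have bd: "norm (u n \<bullet> v - w n \<bullet> v) \<le> norm (u n - w n) * norm v" for n
  proof -
    have "u n \<bullet> v - w n \<bullet> v = (u n - w n) \<bullet> v" by (simp add: inner_diff_left)
    thus ?thesis using Cauchy_Schwarz_ineq2[of "u n - w n" v] by simp
  qed
  ultimately have "(\<lambda>n. u n \<bullet> v - w n \<bullet> v) \<longlonglongrightarrow> 0"
  proof -
    assume l: "(\<lambda>n. norm (u n - w n) * norm v) \<longlonglongrightarrow> 0"
    have ev: "\<forall>n. norm (u n \<bullet> v - w n \<bullet> v) \<le> norm (u n - w n) * norm v" using bd by blast
    show ?thesis using Lim_null_comparison[OF always_eventually[OF ev] l] .
  qed
  moreover have "(\<lambda>n. u n \<bullet> v) \<longlonglongrightarrow> q \<bullet> v" using assms(1) unfolding weak_conv_def by blast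
  ultimately have "(\<lambda>n. u n \<bullet> v - (u n \<bullet> v - w n \<bullet> v)) \<longlonglongrightarrow> q \<bullet> v - 0" by (intro tendsto_diff)
  thus "(\<lambda>n. w n \<bullet> v) \<longlonglongrightarrow> q \<bullet> v" by simp
qed

lemma wc_pinner:
  assumes "\<forall>i\<in>{1..m}. weak_conv (\<lambda>k. X k i) (qq i)"
  shows "(\<lambda>k. pinner m (X k) cc) \<longlonglongrightarrow> pinner m qq cc"
  unfolding pinner_def using assms unfolding weak_conv_def by (intro tendsto_sum) auto




lemma pnormsq_diff: "pnormsq m (X - Y) = pnormsq m X - 2 * pinner m X Y + pnormsq m Y"
  unfolding pnormsq_pinner by (simp add: pinner_simps pinner_commute[of m Y X])

lemma pnormsq_psc: "pnormsq m (psc c v) = c\<^sup>2 * pnormsq m v"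
  unfolding pnormsq_pinner by (simp add: pinner_simps power2_eq_square)

lemma pnormsq_mono_pn: "pn m u \<le> k * pn m v \<Longrightarrow> 0 \<le> k \<Longrightarrow> pnormsq m u \<le> k\<^sup>2 * pnormsq m v"
proof -
  assume a: "pn m u \<le> k * pn m v" "0 \<le> k"
  have "(pn m u)\<^sup>2 \<le> (k * pn m v)\<^sup>2" using a pn_nonneg by (intro power_mono) auto
  thus ?thesis by (simp add: pn_sq power_mult_distrib)
qed

context tseng begin

lemma issub_cong: "issub pp u \<Longrightarrow> (\<And>i. i \<in> {1..m} \<Longrightarrow> u i = u' i) \<Longrightarrow> issub pp u'"
proof -
  assume a: "issub pp u" "\<And>i. i \<in> {1..m} \<Longrightarrow> u i = u' i"
  have "pinner m u w = pinner m u' w" for w by (rule pinner_cong) (use a(2) in auto)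
  thus ?thesis using a(1) unfolding issub_def by simp
qed

lemma issub_PH: "issub pp u \<Longrightarrow> pp \<in> PH m H" unfolding issub_def by simp

lemma J_PH: "0 < lam \<Longrightarrow> yy \<in> PH m H \<Longrightarrow> J lam yy \<in> PH m H" using prox_props by blast

lemma J_sub: "0 < lam \<Longrightarrow> yy \<in> PH m H \<Longrightarrow> issub (J lam yy) (psc (1/lam) (yy - J lam yy))"
  using prox_props by blast

lemma J_nonexp:
  assumes lam: "0 < lam" and y1: "y1 \<in> PH m H" and y2: "y2 \<in> PH m H"
  shows "pn m (J lam y1 - J lam y2) \<le> pn m (y1 - y2)"
proof -
  define p1 where "p1 = J lam y1"
  define p2 where "p2 = J lam y2"
  have s1: "issub p1 (psc (1/lam) (y1 - p1))" unfolding p1_def by (rule J_sub[OF lam y1])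
  have s2: "issub p2 (psc (1/lam) (y2 - p2))" unfolding p2_def by (rule J_sub[OF lam y2])
  have "0 \<le> pinner m (psc (1/lam) (y1 - p1) - psc (1/lam) (y2 - p2)) (p1 - p2)" by (rule sub_mono[OF s1 s2])
  also have "\<dots> = (1/lam) * (pinner m (y1 - y2) (p1 - p2) - pinner m (p1 - p2) (p1 - p2))"
    by (simp add: pinner_simps algebra_simps)
  finally have "pinner m (p1 - p2) (p1 - p2) \<le> pinner m (y1 - y2) (p1 - p2)"
    using lam by (simp add: zero_le_divide_iff)
  also have "\<dots> \<le> pn m (y1 - y2) * pn m (p1 - p2)" by (rule pinner_le')
  finally have "(pn m (p1 - p2))\<^sup>2 \<le> pn m (y1 - y2) * pn m (p1 - p2)" by (simp add: pn_sq pnormsq_pinner)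
  hence "pn m (p1 - p2) * pn m (p1 - p2) \<le> pn m (y1 - y2) * pn m (p1 - p2)" by (simp add: power2_eq_square)
  hence "pn m (p1 - p2) \<le> pn m (y1 - y2)" using pn_nonneg[of m "p1 - p2"] pn_nonneg[of m "y1 - y2"]
    by (cases "pn m (p1 - p2) = 0") (auto simp: mult_le_cancel_right)
  thus ?thesis unfolding p1_def p2_def .
qed

lemma tseng_step:
  assumes xx: "xx \<in> PH m H" and zz: "issub zz (\<lambda>i. - G i zz)" and lam: "0 < lam"
  shows "pnormsq m (J lam (xx - psc lam (Bop xx)) + psc lam (Bop xx - Bop (J lam (xx - psc lam (Bop xx)))) - zz)
        \<le> pnormsq m (xx - zz) - (1 - (lam * chi)\<^sup>2) * pnormsq m (xx - J lam (xx - psc lam (Bop xx)))"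
proof -
  define yb where "yb = xx - psc lam (Bop xx)"
  have ybPH: "yb \<in> PH m H" unfolding yb_def using Hsub xx Bop_PH by (intro PH_diff PH_psc) auto
  define pb where "pb = J lam yb"
  have pbPH: "pb \<in> PH m H" unfolding pb_def by (rule J_PH[OF lam ybPH])
  have s1: "issub pb (psc (1/lam) (yb - pb))" unfolding pb_def by (rule J_sub[OF lam ybPH])
  have zzPH: "zz \<in> PH m H" using zz by (rule issub_PH)
  have m1: "0 \<le> pinner m (psc (1/lam) (yb - pb) - (\<lambda>i. - G i zz)) (pb - zz)" by (rule sub_mono[OF s1 zz])
  have m2: "0 \<le> pinner m (Bop pb - Bop zz) (pb - zz)" by (rule B_mono[OF pbPH zzPH])
  define D where "D = xx - pb"
  define E where "E = psc lam (Bop xx - Bop pb)"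
  define X where "X = xx - zz"
  define Y where "Y = D - E"
  have "pinner m Y (pb - zz) = pinner m (psc lam (psc (1/lam) (yb - pb) - (\<lambda>i. - G i zz)) + psc lam (Bop pb - Bop zz)) (pb - zz)"
  proof (rule pinner_cong)
    fix i assume i: "i \<in> {1..m}"
    show "Y i = (psc lam (psc (1/lam) (yb - pb) - (\<lambda>i. - G i zz)) + psc lam (Bop pb - Bop zz)) i"
      unfolding Y_def D_def E_def yb_def using i lam by (simp add: Bop_def algebra_simps)
  qed simp
  also have "\<dots> = lam * pinner m (psc (1/lam) (yb - pb) - (\<lambda>i. - G i zz)) (pb - zz) + lam * pinner m (Bop pb - Bop zz) (pb - zz)"
    by (simp only: pinner_add_left pinner_psc_left)
  finally have Ynn: "0 \<le> pinner m Y (pb - zz)" using m1 m2 lam by simp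
  have Veq: "pb + E - zz = X - Y" unfolding X_def Y_def D_def by (simp add: algebra_simps)
  have Xeq: "X = (pb - zz) + D" unfolding X_def D_def by (simp add: algebra_simps)
  have 1: "pnormsq m (X - Y) = pnormsq m X - 2 * pinner m X Y + pnormsq m Y" by (rule pnormsq_diff)
  have 2: "pinner m X Y = pinner m (pb - zz) Y + pinner m D Y" unfolding Xeq by (simp only: pinner_add_left)
  have 3: "pinner m D Y = pnormsq m D - pinner m D E" unfolding Y_def by (simp add: pinner_simps pnormsq_pinner)
  have 4: "pnormsq m Y = pnormsq m D - 2 * pinner m D E + pnormsq m E" unfolding Y_def by (rule pnormsq_diff)
  have 5: "pinner m (pb - zz) Y = pinner m Y (pb - zz)" by (rule pinner_commute)
  have "pn m (Bop xx - Bop pb) \<le> chi * pn m (xx - pb)" by (rule B_lip[OF xx pbPH])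
  hence "pnormsq m (Bop xx - Bop pb) \<le> chi\<^sup>2 * pnormsq m D" unfolding D_def using chi_pos
    by (intro pnormsq_mono_pn) auto
  hence 6: "pnormsq m E \<le> (lam * chi)\<^sup>2 * pnormsq m D" unfolding E_def pnormsq_psc
    by (simp add: power_mult_distrib mult.assoc mult_left_mono)
  have "pnormsq m (pb + E - zz) \<le> pnormsq m X - (1 - (lam * chi)\<^sup>2) * pnormsq m D"
    unfolding Veq 1 2 3 4 5 using Ynn 6 by (simp add: algebra_simps)
  thus ?thesis unfolding E_def X_def D_def pb_def yb_def .
qed

end



context tseng begin

lemmas y_eq = y_def[rule_format]
lemmas p_eq = p_def[rule_format]
lemmas q_eq = q_def[rule_format]
lemmas x_Suc = x_def[rule_format]

lemma eps_lt1: "eps < 1"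
proof -
  have "1 / (chi + 1) < 1" using chi_pos by simp
  thus ?thesis using eps_pos by linarith
qed

lemma gam_pos: "0 < \<gamma> n" using gamma eps_pos by (meson less_le_trans)

lemma gam_chi: "\<gamma> n * chi \<le> 1 - eps"
proof -
  have "\<gamma> n \<le> (1 - eps) / chi" using gamma by blast
  thus ?thesis using chi_pos by (simp add: pos_le_divide_eq)
qed

lemma gam_le: "\<gamma> n \<le> 1 / chi"
proof -
  have "\<gamma> n \<le> (1 - eps) / chi" using gamma by blast
  also have "\<dots> \<le> 1 / chi" using chi_pos eps_pos by (simp add: divide_right_mono)
  finally show ?thesis .
qed

lemma step_PH:
  assumes xn: "x n \<in> PH m H"
  shows "y n \<in> PH m H \<and> p n \<in> PH m H \<and> q n \<in> PH m H \<and> x (Suc n) \<in> PH m H"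
proof -
  have xi: "x n i \<in> H i" if "i \<in> {1..m}" for i using xn that unfolding PH_def by auto
  have ab: "a n i \<in> H i" "b n i \<in> H i" "c n i \<in> H i" if "i \<in> {1..m}" for i using abc that by auto
  have sH: "subspace (H i)" if "i \<in> {1..m}" for i using Hsub that by auto
  have yPH: "y n \<in> PH m H" unfolding PH_def y_eq
    using xi ab G_in xn sH by (auto intro!: subspace_diff subspace_add subspace_scale)
  have JPH: "J (\<gamma> n) (y n) \<in> PH m H" by (rule J_PH[OF gam_pos yPH])
  have pPH: "p n \<in> PH m H" unfolding PH_def p_eq using JPH ab sH unfolding PH_def J_def[symmetric]
    by (auto intro!: subspace_add)
  have pi: "p n i \<in> H i" if "i \<in> {1..m}" for i using pPH that unfolding PH_def by auto
  have qPH: "q n \<in> PH m H" unfolding PH_def q_eq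
    using pi ab G_in pPH sH by (auto intro!: subspace_diff subspace_add subspace_scale)
  have yi: "y n i \<in> H i" if "i \<in> {1..m}" for i using yPH that unfolding PH_def by auto
  have qi: "q n i \<in> H i" if "i \<in> {1..m}" for i using qPH that unfolding PH_def by auto
  have "x (Suc n) \<in> PH m H" unfolding PH_def x_Suc
    using xi yi qi sH by (auto intro!: subspace_diff subspace_add)
  thus ?thesis using yPH pPH qPH by blast
qed

lemma xPH: "x n \<in> PH m H"
  by (induct n) (use x0 step_PH in auto)

lemma yPH: "y n \<in> PH m H" using step_PH[OF xPH] by blast
lemma pPH: "p n \<in> PH m H" using step_PH[OF xPH] by blast

definition "Yb n = x n - psc (\<gamma> n) (Bop (x n))"
definition "Pb n = J (\<gamma> n) (Yb n)"
definition "Pt n = J (\<gamma> n) (y n)"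
definition "Xp n = Pb n + psc (\<gamma> n) (Bop (x n) - Bop (Pb n))"
definition "e n = (\<Sum>i\<in>{1..m}. norm (a n i) + norm (b n i) + norm (c n i))"

lemma YbPH: "Yb n \<in> PH m H" unfolding Yb_def using Hsub xPH Bop_PH by (intro PH_diff PH_psc) auto
lemma PbPH: "Pb n \<in> PH m H" unfolding Pb_def by (rule J_PH[OF gam_pos YbPH])
lemma PtPH: "Pt n \<in> PH m H" unfolding Pt_def by (rule J_PH[OF gam_pos yPH])

lemma e_nonneg: "0 \<le> e n" unfolding e_def by (intro sum_nonneg) auto

lemma e_summable: "summable e"
  unfolding e_def using abc by (intro summable_sum summable_add) auto

lemma e_zero: "e \<longlonglongrightarrow> 0" using e_summable by (rule summable_LIMSEQ_zero)

lemma pn_a: "pn m (\<lambda>i. a n i) \<le> e n" and pn_b: "pn m (\<lambda>i. b n i) \<le> e n" and pn_c: "pn m (\<lambda>i. c n i) \<le> e n"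
proof -
  have "pn m (\<lambda>i. a n i) \<le> (\<Sum>i\<in>{1..m}. norm (a n i))" by (rule pn_le_sum)
  also have "\<dots> \<le> e n" unfolding e_def by (intro sum_mono) auto
  finally show "pn m (\<lambda>i. a n i) \<le> e n" .
  have "pn m (\<lambda>i. b n i) \<le> (\<Sum>i\<in>{1..m}. norm (b n i))" by (rule pn_le_sum)
  also have "\<dots> \<le> e n" unfolding e_def by (intro sum_mono) auto
  finally show "pn m (\<lambda>i. b n i) \<le> e n" .
  have "pn m (\<lambda>i. c n i) \<le> (\<Sum>i\<in>{1..m}. norm (c n i))" by (rule pn_le_sum)
  also have "\<dots> \<le> e n" unfolding e_def by (intro sum_mono) auto
  finally show "pn m (\<lambda>i. c n i) \<le> e n" .
qed

lemma y_Yb: "pn m (y n - Yb n) \<le> \<gamma> n * e n"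
proof -
  have "pn m (y n - Yb n) = pn m (psc (- \<gamma> n) (\<lambda>i. a n i))"
    by (rule pn_cong) (simp add: y_eq Yb_def Bop_def algebra_simps)
  also have "\<dots> = \<gamma> n * pn m (\<lambda>i. a n i)" using gam_pos[of n] by (simp add: pn_psc)
  also have "\<dots> \<le> \<gamma> n * e n" using pn_a gam_pos[of n] by (intro mult_left_mono) auto
  finally show ?thesis .
qed

lemma Pt_Pb: "pn m (Pt n - Pb n) \<le> \<gamma> n * e n"
  unfolding Pt_def Pb_def using J_nonexp[OF gam_pos yPH YbPH] y_Yb by (rule order_trans)

lemma p_Pt: "pn m (p n - Pt n) \<le> e n"
proof -
  have "pn m (p n - Pt n) = pn m (\<lambda>i. b n i)"
    by (rule pn_cong) (simp add: p_eq Pt_def J_def)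
  thus ?thesis using pn_b by simp
qed

lemma p_Pb: "pn m (p n - Pb n) \<le> (1 + 1 / chi) * e n"
proof -
  have "p n - Pb n = (p n - Pt n) + (Pt n - Pb n)" by simp
  hence "pn m (p n - Pb n) \<le> pn m (p n - Pt n) + pn m (Pt n - Pb n)" using pn_triangle by metis
  also have "\<dots> \<le> e n + \<gamma> n * e n" using p_Pt Pt_Pb by (rule add_mono)
  also have "\<dots> \<le> e n + 1 / chi * e n" using gam_le e_nonneg by (intro add_left_mono mult_right_mono) auto
  finally show ?thesis by (simp add: algebra_simps)
qed

definition "C0 = 2 + 4 / chi"

lemma x_Xp: "pn m (x (Suc n) - Xp n) \<le> C0 * e n"
proof -
  define V where "V = (p n - Pb n) - psc (\<gamma> n) (Bop (p n) - Bop (Pb n)) + psc (\<gamma> n) ((\<lambda>i. a n i) - (\<lambda>i. c n i))"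
  have "pn m (x (Suc n) - Xp n) = pn m V"
    by (rule pn_cong) (simp add: V_def x_Suc y_eq q_eq Xp_def Bop_def algebra_simps)
  also have "pn m V \<le> pn m ((p n - Pb n) - psc (\<gamma> n) (Bop (p n) - Bop (Pb n))) + pn m (psc (\<gamma> n) ((\<lambda>i. a n i) - (\<lambda>i. c n i)))"
    unfolding V_def by (rule pn_triangle)
  also have "\<dots> \<le> (pn m (p n - Pb n) + \<gamma> n * pn m (Bop (p n) - Bop (Pb n))) + \<gamma> n * (pn m (\<lambda>i. a n i) + pn m (\<lambda>i. c n i))"
    using pn_diff_triangle[of m "p n - Pb n" "psc (\<gamma> n) (Bop (p n) - Bop (Pb n))"]
      pn_diff_triangle[of m "\<lambda>i. a n i" "\<lambda>i. c n i"] gam_pos[of n]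
    by (intro add_mono) (auto simp: pn_psc mult_left_mono)
  also have "\<dots> \<le> ((1 + 1/chi) * e n + 1 * ((1 + 1/chi) * e n)) + 1 / chi * (e n + e n)"
  proof (intro add_mono)
    show "pn m (p n - Pb n) \<le> (1 + 1/chi) * e n" by (rule p_Pb)
    have "\<gamma> n * pn m (Bop (p n) - Bop (Pb n)) \<le> \<gamma> n * (chi * pn m (p n - Pb n))"
      using B_lip[OF pPH PbPH] gam_pos[of n] by (intro mult_left_mono) auto
    also have "\<dots> = (\<gamma> n * chi) * pn m (p n - Pb n)" by simp
    also have "\<dots> \<le> 1 * ((1 + 1/chi) * e n)"
      using gam_chi[of n] eps_pos p_Pb[of n] pn_nonneg[of m "p n - Pb n"] gam_pos[of n] chi_pos
      by (intro mult_mono) auto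
    finally show "\<gamma> n * pn m (Bop (p n) - Bop (Pb n)) \<le> 1 * ((1 + 1/chi) * e n)" .
    show "\<gamma> n * (pn m (\<lambda>i. a n i) + pn m (\<lambda>i. c n i)) \<le> 1 / chi * (e n + e n)"
      using gam_le[of n] pn_a[of n] pn_c[of n] e_nonneg[of n] chi_pos pn_nonneg[of m "\<lambda>i. a n i"] pn_nonneg[of m "\<lambda>i. c n i"]
      by (intro mult_mono) auto
  qed
  also have "\<dots> \<le> C0 * e n" unfolding C0_def using e_nonneg[of n] chi_pos by (simp add: algebra_simps)
  finally show ?thesis .
qed

definition "eta = 1 - (1 - eps)\<^sup>2"

lemma eta_pos: "0 < eta"
  unfolding eta_def using eps_pos eps_lt1 by (simp add: power2_eq_square algebra_simps mult_strict_right_mono)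

lemma Xp_fejer:
  assumes zz: "issub zz (\<lambda>i. - G i zz)"
  shows "pnormsq m (Xp n - zz) \<le> pnormsq m (x n - zz) - eta * pnormsq m (x n - Pb n)"
proof -
  have "pnormsq m (Xp n - zz) \<le> pnormsq m (x n - zz) - (1 - (\<gamma> n * chi)\<^sup>2) * pnormsq m (x n - Pb n)"
    using tseng_step[OF xPH zz gam_pos] unfolding Xp_def Pb_def Yb_def .
  moreover have "eta \<le> 1 - (\<gamma> n * chi)\<^sup>2"
  proof -
    have "0 \<le> \<gamma> n * chi" using gam_pos[of n] chi_pos by simp
    hence "(\<gamma> n * chi)\<^sup>2 \<le> (1 - eps)\<^sup>2" using gam_chi[of n] by (intro power_mono) auto
    thus ?thesis unfolding eta_def by simp
  qed
  ultimately show ?thesis using pnormsq_nonneg[of m "x n - Pb n"]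
    by (smt (verit) mult_right_mono)
qed

lemma alpha_step:
  assumes zz: "issub zz (\<lambda>i. - G i zz)"
  shows "pn m (Xp n - zz) \<le> pn m (x n - zz)"
    and "pn m (x (Suc n) - zz) \<le> pn m (x n - zz) + C0 * e n"
proof -
  have "pnormsq m (Xp n - zz) \<le> pnormsq m (x n - zz)"
    using Xp_fejer[OF zz, of n] eta_pos pnormsq_nonneg[of m "x n - Pb n"] by (smt (verit) mult_nonneg_nonneg)
  thus 1: "pn m (Xp n - zz) \<le> pn m (x n - zz)" by (simp add: pnormsq_le_pn)
  have "x (Suc n) - zz = (x (Suc n) - Xp n) + (Xp n - zz)" by simp
  hence "pn m (x (Suc n) - zz) \<le> pn m (x (Suc n) - Xp n) + pn m (Xp n - zz)" using pn_triangle by metis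
  thus "pn m (x (Suc n) - zz) \<le> pn m (x n - zz) + C0 * e n" using 1 x_Xp[of n] by linarith
qed

lemma C0_pos: "0 < C0" unfolding C0_def using chi_pos by (simp add: add_pos_pos)

lemma alpha_conv:
  assumes zz: "issub zz (\<lambda>i. - G i zz)"
  shows "convergent (\<lambda>n. pn m (x n - zz))"
proof (rule quasi_fejer[where \<epsilon>="\<lambda>n. C0 * e n"])
  show "summable (\<lambda>n. C0 * e n)" using e_summable by (rule summable_mult)
qed (use alpha_step(2)[OF zz] pn_nonneg e_nonneg C0_pos in auto)

end



context tseng begin

lemma res_zero: "(\<lambda>n. pn m (x n - Pb n)) \<longlonglongrightarrow> 0"
proof -
  define \<alpha> where "\<alpha> n = pn m (x n - z)" for n
  have ca: "convergent \<alpha>" unfolding \<alpha>_def by (rule alpha_conv[OF z_sub])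
  then obtain L where aL: "\<alpha> \<longlonglongrightarrow> L" by (auto simp: convergent_def)
  obtain A where A: "\<And>n. \<alpha> n \<le> A"
  proof -
    have "Bseq \<alpha>" using ca by (rule convergent_imp_Bseq)
    then obtain K where K: "\<forall>n. norm (\<alpha> n) \<le> K" by (auto elim: BseqE)
    have "\<alpha> n \<le> K" for n using K[rule_format, of n] by simp
    thus ?thesis using that by blast
  qed
  have a0: "0 \<le> \<alpha> n" for n unfolding \<alpha>_def by (rule pn_nonneg)
  define R where "R n = \<alpha> n ^ 2 - \<alpha> (Suc n) ^ 2 + 2 * C0 * A * e n + C0\<^sup>2 * (e n)\<^sup>2" for n
  have key: "eta * pnormsq m (x n - Pb n) \<le> R n" for n
  proof -
    define P where "P = pn m (Xp n - z)"
    have P0: "0 \<le> P" unfolding P_def by (rule pn_nonneg)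
    have PA: "P \<le> \<alpha> n" unfolding P_def \<alpha>_def by (rule alpha_step(1)[OF z_sub])
    have s: "\<alpha> (Suc n) \<le> P + C0 * e n" unfolding P_def \<alpha>_def by (rule order_trans[OF _ add_right_mono[OF order_refl]])
      (use x_Xp[of n] pn_triangle[of m "x (Suc n) - Xp n" "Xp n - z"] in \<open>simp add: algebra_simps\<close>)
    have ce: "0 \<le> C0 * e n" using C0_pos e_nonneg[of n] by simp
    have "\<alpha> (Suc n) ^ 2 \<le> (P + C0 * e n) ^ 2" using s a0[of "Suc n"] by (intro power_mono) auto
    also have "\<dots> = P\<^sup>2 + 2 * P * (C0 * e n) + C0\<^sup>2 * (e n)\<^sup>2" by (simp add: power2_eq_square algebra_simps)
    also have "2 * P * (C0 * e n) \<le> 2 * A * (C0 * e n)" using PA A[of n] ce by (intro mult_right_mono) auto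
    also have "P\<^sup>2 = pnormsq m (Xp n - z)" unfolding P_def by (rule pn_sq)
    also have "pnormsq m (Xp n - z) \<le> \<alpha> n ^ 2 - eta * pnormsq m (x n - Pb n)"
      using Xp_fejer[OF z_sub, of n] unfolding \<alpha>_def pn_sq .
    finally show ?thesis unfolding R_def by (simp add: algebra_simps)
  qed
  have RL: "R \<longlonglongrightarrow> L^2 - L^2 + 2 * C0 * A * 0 + C0\<^sup>2 * 0\<^sup>2" unfolding R_def
    by (intro tendsto_intros aL LIMSEQ_Suc[OF aL] e_zero)
  hence "R \<longlonglongrightarrow> 0" by simp
  hence "(\<lambda>n. R n / eta) \<longlonglongrightarrow> 0 / eta" by (intro tendsto_divide tendsto_const) (use eta_pos in auto)
  hence RL0: "(\<lambda>n. R n / eta) \<longlonglongrightarrow> 0" by simp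
  have "(\<lambda>n. pnormsq m (x n - Pb n)) \<longlonglongrightarrow> 0"
  proof (rule tendsto_sandwich[OF _ _ tendsto_const RL0])
    show "\<forall>\<^sub>F n in sequentially. 0 \<le> pnormsq m (x n - Pb n)" by (intro always_eventually allI pnormsq_nonneg)
    show "\<forall>\<^sub>F n in sequentially. pnormsq m (x n - Pb n) \<le> R n / eta"
      using key eta_pos by (intro always_eventually allI) (simp add: pos_le_divide_eq mult.commute)
  qed
  hence "(\<lambda>n. sqrt (pnormsq m (x n - Pb n))) \<longlonglongrightarrow> sqrt 0" by (rule tendsto_real_sqrt)
  thus ?thesis unfolding pn_def by simp
qed

lemma res_p: "(\<lambda>n. pn m (x n - p n)) \<longlonglongrightarrow> 0"
proof -
  have bd: "pn m (x n - p n) \<le> pn m (x n - Pb n) + (1 + 1/chi) * e n" for n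
  proof -
    have "x n - p n = (x n - Pb n) + (Pb n - p n)" by simp
    hence "pn m (x n - p n) \<le> pn m (x n - Pb n) + pn m (Pb n - p n)" using pn_triangle by metis
    thus ?thesis using p_Pb[of n] pn_minus_commute[of m "Pb n" "p n"] by linarith
  qed
  have "(\<lambda>n. pn m (x n - Pb n) + (1 + 1/chi) * e n) \<longlonglongrightarrow> 0 + (1 + 1/chi) * 0"
    by (intro tendsto_intros res_zero e_zero)
  hence l: "(\<lambda>n. pn m (x n - Pb n) + (1 + 1/chi) * e n) \<longlonglongrightarrow> 0" by simp
  show ?thesis
  proof (rule tendsto_sandwich[OF _ _ tendsto_const l])
    show "\<forall>\<^sub>F n in sequentially. 0 \<le> pn m (x n - p n)" by (intro always_eventually allI pn_nonneg)
    show "\<forall>\<^sub>F n in sequentially. pn m (x n - p n) \<le> pn m (x n - Pb n) + (1 + 1/chi) * e n"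
      using bd by (intro always_eventually allI) auto
  qed
qed

lemma comp_norm_zero:
  assumes "(\<lambda>k. pn m (X k - Y k)) \<longlonglongrightarrow> 0" "i \<in> {1..m}"
  shows "(\<lambda>k. norm (X k i - Y k i)) \<longlonglongrightarrow> 0"
proof (rule tendsto_sandwich[OF _ _ tendsto_const assms(1)])
  show "\<forall>\<^sub>F k in sequentially. 0 \<le> norm (X k i - Y k i)" by simp
  show "\<forall>\<^sub>F k in sequentially. norm (X k i - Y k i) \<le> pn m (X k - Y k)"
    using norm_le_pn[OF assms(2), of "X _ - Y _"] by (intro always_eventually allI) simp
qed

end



context tseng begin

lemma eps_chi: "eps * chi < 1"
proof -
  have "eps * chi < 1 / (chi + 1) * chi" using eps_pos chi_pos by (intro mult_strict_right_mono) auto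
  also have "\<dots> < 1" using chi_pos by (simp add: field_simps)
  finally show ?thesis .
qed

lemma x_bound: "\<exists>K. \<forall>n. pn m (x n - z) \<le> K"
proof -
  have "Bseq (\<lambda>n. pn m (x n - z))" using alpha_conv[OF z_sub] by (rule convergent_imp_Bseq)
  then obtain K where K: "\<forall>n. norm (pn m (x n - z)) \<le> K" by (auto elim: BseqE)
  have "pn m (x n - z) \<le> K" for n using K[rule_format, of n] by simp
  thus ?thesis by blast
qed

lemma res_bound: "\<exists>K. \<forall>n. pn m (x n - Pb n) \<le> K"
proof -
  have "convergent (\<lambda>n. pn m (x n - Pb n))" using res_zero by (auto simp: convergent_def)
  hence "Bseq (\<lambda>n. pn m (x n - Pb n))" by (rule convergent_imp_Bseq)
  then obtain K where K: "\<forall>n. norm (pn m (x n - Pb n)) \<le> K" by (auto elim: BseqE)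
  have "pn m (x n - Pb n) \<le> K" for n using K[rule_format, of n] by simp
  thus ?thesis by blast
qed

lemma cluster_Z:
  assumes r: "strict_mono r" and qqPH: "qq \<in> PH m H"
    and wc: "\<forall>i\<in>{1..m}. weak_conv (\<lambda>k. x (r k) i) (qq i)"
  shows "issub qq (\<lambda>i. - G i qq)"
proof -
  define P where "P k = Pb (r k)" for k
  define xs where "xs k = x (r k)" for k
  define lam where "lam k = \<gamma> (r k)" for k
  have resP: "(\<lambda>k. pn m (xs k - P k)) \<longlonglongrightarrow> 0"
    using LIMSEQ_subseq_LIMSEQ[OF res_zero r] unfolding xs_def P_def by (simp add: o_def)
  have wcP: "\<forall>i\<in>{1..m}. weak_conv (\<lambda>k. P k i) (qq i)"
  proof
    fix i assume i: "i \<in> {1..m}"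
    show "weak_conv (\<lambda>k. P k i) (qq i)"
      by (rule weak_conv_close[OF wc[rule_format, OF i]]) (use comp_norm_zero[OF resP i] in \<open>simp add: xs_def\<close>)
  qed
  define u where "u k = psc (1 / lam k) (Yb (r k) - P k)" for k
  have su: "issub (P k) (u k)" for k unfolding u_def P_def lam_def Pb_def by (rule J_sub[OF gam_pos YbPH])
  have PPH: "P k \<in> PH m H" for k unfolding P_def by (rule PbPH)
  have xsPH: "xs k \<in> PH m H" for k unfolding xs_def by (rule xPH)
  define K1 where "K1 = 1 / eps + chi"
  have \<delta>b: "pn m (u k + Bop (P k)) \<le> K1 * pn m (xs k - P k)" for k
  proof -
    have "pn m (u k + Bop (P k)) = pn m (psc (1 / lam k) (xs k - P k) - (Bop (xs k) - Bop (P k)))"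
    proof (rule pn_cong)
      fix i assume i: "i \<in> {1..m}"
      have "lam k \<noteq> 0" using gam_pos unfolding lam_def by (metis less_irrefl)
      thus "(u k + Bop (P k)) i = (psc (1 / lam k) (xs k - P k) - (Bop (xs k) - Bop (P k))) i"
        unfolding u_def Yb_def xs_def using i by (simp add: Bop_def algebra_simps lam_def)
    qed
    also have "\<dots> \<le> pn m (psc (1 / lam k) (xs k - P k)) + pn m (Bop (xs k) - Bop (P k))" by (rule pn_diff_triangle)
    also have "\<dots> \<le> 1 / eps * pn m (xs k - P k) + chi * pn m (xs k - P k)"
    proof (rule add_mono)
      have le: "1 / lam k \<le> 1 / eps" using gamma eps_pos unfolding lam_def by (simp add: frac_le)
      have "pn m (psc (1 / lam k) (xs k - P k)) = (1 / lam k) * pn m (xs k - P k)"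
        using gam_pos[of "r k"] unfolding lam_def by (simp add: pn_psc)
      also have "\<dots> \<le> 1 / eps * pn m (xs k - P k)" using le pn_nonneg by (intro mult_right_mono) auto
      finally show "pn m (psc (1 / lam k) (xs k - P k)) \<le> 1 / eps * pn m (xs k - P k)" .
      show "pn m (Bop (xs k) - Bop (P k)) \<le> chi * pn m (xs k - P k)" by (rule B_lip[OF xsPH PPH])
    qed
    finally show ?thesis unfolding K1_def by (simp add: algebra_simps)
  qed
  have K1: "0 \<le> K1" unfolding K1_def using eps_pos chi_pos by simp
  obtain Ax where Ax: "\<And>n. pn m (x n - z) \<le> Ax" using x_bound by blast
  obtain Ar where Ar: "\<And>n. pn m (x n - Pb n) \<le> Ar" using res_bound by blast
  have lim_ineq: "pinner m (v + Bop w) (qq - w) \<le> 0" if sw: "issub w v" for w v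
  proof -
    have wPH: "w \<in> PH m H" using sw by (rule issub_PH)
    define Bd where "Bd = Ar + Ax + pn m (z - w)"
    have Pw: "pn m (P k - w) \<le> Bd" for k
    proof -
      have e1: "P k - w = (P k - xs k) + ((xs k - z) + (z - w))" by (simp add: algebra_simps)
      have t1: "pn m (P k - w) \<le> pn m (P k - xs k) + pn m ((xs k - z) + (z - w))"
        unfolding e1 by (rule pn_triangle)
      have t2: "pn m ((xs k - z) + (z - w)) \<le> pn m (xs k - z) + pn m (z - w)" by (rule pn_triangle)
      from t1 t2 have "pn m (P k - w) \<le> pn m (P k - xs k) + (pn m (xs k - z) + pn m (z - w))" by linarith
      moreover have "pn m (P k - xs k) \<le> Ar" using Ar[of "r k"] pn_minus_commute[of m "P k" "xs k"] unfolding P_def xs_def by simp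
      moreover have "pn m (xs k - z) \<le> Ax" using Ax unfolding xs_def by blast
      ultimately show ?thesis unfolding Bd_def by linarith
    qed
    define S where "S k = pinner m (v + Bop w) (P k - w)" for k
    have Sle: "S k \<le> K1 * pn m (xs k - P k) * Bd" for k
    proof -
      have 1: "0 \<le> pinner m (u k - v) (P k - w)" by (rule sub_mono[OF su sw])
      have 2: "0 \<le> pinner m (Bop (P k) - Bop w) (P k - w)" by (rule B_mono[OF PPH wPH])
      have "pinner m (u k - v) (P k - w) + pinner m (Bop (P k) - Bop w) (P k - w)
          = pinner m (u k + Bop (P k)) (P k - w) - S k" unfolding S_def by (simp add: pinner_simps)
      hence "S k \<le> pinner m (u k + Bop (P k)) (P k - w)" using 1 2 by linarith
      also have "\<dots> \<le> pn m (u k + Bop (P k)) * pn m (P k - w)" by (rule pinner_le')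
      also have "\<dots> \<le> (K1 * pn m (xs k - P k)) * Bd"
        using \<delta>b[of k] Pw[of k] pn_nonneg K1 by (intro mult_mono) auto
      finally show ?thesis .
    qed
    have "(\<lambda>k. K1 * pn m (xs k - P k) * Bd) \<longlonglongrightarrow> K1 * 0 * Bd" by (intro tendsto_intros resP)
    hence T0: "(\<lambda>k. K1 * pn m (xs k - P k) * Bd) \<longlonglongrightarrow> 0" by simp
    have "(\<lambda>k. pinner m (P k) (v + Bop w) - pinner m w (v + Bop w)) \<longlonglongrightarrow> pinner m qq (v + Bop w) - pinner m w (v + Bop w)"
      by (intro tendsto_diff tendsto_const wc_pinner wcP)
    hence SL: "S \<longlonglongrightarrow> pinner m (v + Bop w) (qq - w)" unfolding S_def
      by (simp add: pinner_diff_right pinner_commute[of m "v + Bop w"])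
    show ?thesis by (rule LIMSEQ_le[OF SL T0]) (use Sle in blast)
  qed
  \<comment> \<open>Minty argument\<close>
  define yq where "yq = qq - psc eps (Bop qq)"
  have yqPH: "yq \<in> PH m H" unfolding yq_def using Hsub qqPH Bop_PH by (intro PH_diff PH_psc) auto
  define w0 where "w0 = J eps yq"
  define v0 where "v0 = psc (1 / eps) (yq - w0)"
  have s0: "issub w0 v0" unfolding w0_def v0_def by (rule J_sub[OF eps_pos(1) yqPH])
  have w0PH: "w0 \<in> PH m H" using s0 by (rule issub_PH)
  have "pinner m (v0 + Bop w0) (qq - w0) \<le> 0" by (rule lim_ineq[OF s0])
  moreover have "eps * pinner m (v0 + Bop w0) (qq - w0) = pinner m ((qq - w0) - psc eps (Bop qq - Bop w0)) (qq - w0)"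
  proof -
    have "eps * pinner m (v0 + Bop w0) (qq - w0) = pinner m (psc eps (v0 + Bop w0)) (qq - w0)" by (simp add: pinner_psc_left)
    also have "\<dots> = pinner m ((qq - w0) - psc eps (Bop qq - Bop w0)) (qq - w0)"
    proof (rule pinner_cong)
      fix i assume "i \<in> {1..m}"
      have "eps \<noteq> 0" using eps_pos by simp
      thus "psc eps (v0 + Bop w0) i = ((qq - w0) - psc eps (Bop qq - Bop w0)) i"
        by (simp add: v0_def yq_def algebra_simps)
    qed simp
    finally show ?thesis .
  qed
  ultimately have "pinner m ((qq - w0) - psc eps (Bop qq - Bop w0)) (qq - w0) \<le> 0"
  proof -
    assume a1: "pinner m (v0 + Bop w0) (qq - w0) \<le> 0"
      and a2: "eps * pinner m (v0 + Bop w0) (qq - w0) = pinner m ((qq - w0) - psc eps (Bop qq - Bop w0)) (qq - w0)"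
    have "eps * pinner m (v0 + Bop w0) (qq - w0) \<le> 0" using a1 eps_pos by (simp add: mult_nonneg_nonpos)
    thus ?thesis using a2 by simp
  qed
  hence A: "pnormsq m (qq - w0) \<le> eps * pinner m (Bop qq - Bop w0) (qq - w0)"
    by (simp add: pinner_simps pnormsq_pinner algebra_simps)
  have "pinner m (Bop qq - Bop w0) (qq - w0) \<le> pn m (Bop qq - Bop w0) * pn m (qq - w0)" by (rule pinner_le')
  also have "\<dots> \<le> (chi * pn m (qq - w0)) * pn m (qq - w0)"
    using B_lip[OF qqPH w0PH] pn_nonneg by (intro mult_right_mono) auto
  finally have "eps * pinner m (Bop qq - Bop w0) (qq - w0) \<le> eps * ((chi * pn m (qq - w0)) * pn m (qq - w0))"
    using eps_pos by (intro mult_left_mono) auto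
  with A have "(pn m (qq - w0))\<^sup>2 \<le> (eps * chi) * (pn m (qq - w0))\<^sup>2"
    by (simp add: pn_sq[symmetric] power2_eq_square algebra_simps)
  hence "(1 - eps * chi) * (pn m (qq - w0))\<^sup>2 \<le> 0" by (simp add: algebra_simps)
  moreover have "0 < 1 - eps * chi" using eps_chi by simp
  ultimately have "(pn m (qq - w0))\<^sup>2 \<le> 0" by (simp add: mult_le_0_iff)
  hence "pn m (qq - w0) = 0" by simp
  hence qw: "qq = w0" using PH_eqI[OF qqPH w0PH] by simp
  have "issub qq v0" using s0 qw by simp
  thus ?thesis
  proof (rule issub_cong)
    fix i assume i: "i \<in> {1..m}"
    show "v0 i = - G i qq" unfolding v0_def yq_def qw[symmetric] using i eps_pos by (simp add: Bop_def)
  qed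
qed

end



context tseng begin

lemma comp_bound: "\<exists>K. \<forall>n i. i \<in> {1..m} \<longrightarrow> norm (x n i) \<le> K"
proof -
  obtain Ax where Ax: "\<And>n. pn m (x n - z) \<le> Ax" using x_bound by blast
  have "norm (x n i) \<le> Ax + pn m z" if i: "i \<in> {1..m}" for n i
  proof -
    have "norm (x n i) \<le> pn m (x n)" by (rule norm_le_pn[OF i])
    also have "pn m (x n) = pn m ((x n - z) + z)" by simp
    also have "\<dots> \<le> pn m (x n - z) + pn m z" by (rule pn_triangle)
    finally show ?thesis using Ax[of n] by linarith
  qed
  thus ?thesis by blast
qed

lemma PH_weak_compact:
  fixes s :: "nat \<Rightarrow> nat"
  assumes s: "strict_mono s"
  shows "\<exists>r qq. strict_mono r \<and> qq \<in> PH m H \<and> (\<forall>i\<in>{1..m}. weak_conv (\<lambda>k. x (s (r k)) i) (qq i))"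
proof -
  obtain K where K: "\<And>n i. i \<in> {1..m} \<Longrightarrow> norm (x n i) \<le> K" using comp_bound by blast
  have ind: "N \<le> m \<longrightarrow> (\<exists>r qq. strict_mono r \<and> (\<forall>i\<in>{1..N}. qq i \<in> H i \<and> weak_conv (\<lambda>k. x (s (r k)) i) (qq i)))" for N
  proof (induct N)
    case 0
    show ?case
      by (rule impI, rule exI[where x="id::nat\<Rightarrow>nat"], rule exI[where x="\<lambda>i. 0"]) (simp add: strict_mono_def)
  next
    case (Suc N)
    show ?case
    proof
      assume SN: "Suc N \<le> m"
      then obtain r qq where r: "strict_mono r" and h: "\<forall>i\<in>{1..N}. qq i \<in> H i \<and> weak_conv (\<lambda>k. x (s (r k)) i) (qq i)"
        using Suc by auto
      define j where "j = Suc N"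
      have j: "j \<in> {1..m}" unfolding j_def using SN by simp
      define u where "u k = x (s (r k)) j" for k
      have ub: "norm (u k) \<le> K" for k unfolding u_def using K[OF j] .
      obtain r' q' where r': "strict_mono r'" and q'cl: "q' \<in> closure (span (range u))"
        and wq: "weak_conv (u \<circ> r') q'" using weak_compact[of u K, OF ub] by blast
      have "range u \<subseteq> H j" unfolding u_def using xPH j unfolding PH_def by auto
      hence "span (range u) \<subseteq> H j" using Hsub j by (intro span_minimal) auto
      hence "closure (span (range u)) \<subseteq> H j" using Hcl[OF j] by (intro closure_minimal) auto
      hence q'H: "q' \<in> H j" using q'cl by blast
      have sm: "strict_mono (r \<circ> r')" using r r' by (rule strict_mono_o)
      have "\<forall>i\<in>{1..Suc N}. (qq(j := q')) i \<in> H i \<and> weak_conv (\<lambda>k. x (s ((r \<circ> r') k)) i) ((qq(j := q')) i)"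
      proof
        fix i assume i: "i \<in> {1..Suc N}"
        show "(qq(j := q')) i \<in> H i \<and> weak_conv (\<lambda>k. x (s ((r \<circ> r') k)) i) ((qq(j := q')) i)"
        proof (cases "i = j")
          case True
          thus ?thesis using q'H wq unfolding u_def by (simp add: o_def)
        next
          case False
          hence i': "i \<in> {1..N}" using i unfolding j_def by auto
          thus ?thesis using False h weak_conv_subseq[OF _ r', of "\<lambda>k. x (s (r k)) i" "qq i"] by (simp add: o_def)
        qed
      qed
      thus "\<exists>r qq. strict_mono r \<and> (\<forall>i\<in>{1..Suc N}. qq i \<in> H i \<and> weak_conv (\<lambda>k. x (s (r k)) i) (qq i))"
        using sm by blast
    qed
  qed
  obtain r qq where r: "strict_mono r" and h: "\<forall>i\<in>{1..m}. qq i \<in> H i \<and> weak_conv (\<lambda>k. x (s (r k)) i) (qq i)"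
    using ind[of m] by auto
  define qq0 where "qq0 i = (if i \<in> {1..m} then qq i else 0)" for i
  have "qq0 \<in> PH m H" unfolding PH_def qq0_def using h by auto
  moreover have "\<forall>i\<in>{1..m}. weak_conv (\<lambda>k. x (s (r k)) i) (qq0 i)" unfolding qq0_def using h by simp
  ultimately show ?thesis using r by blast
qed

lemma xb_unique:
  assumes s1: "issub q1 (\<lambda>i. - G i q1)" and s2: "issub q2 (\<lambda>i. - G i q2)"
    and r1: "strict_mono r1" and r2: "strict_mono r2"
    and w1: "\<forall>i\<in>{1..m}. weak_conv (\<lambda>k. x (r1 k) i) (q1 i)"
    and w2: "\<forall>i\<in>{1..m}. weak_conv (\<lambda>k. x (r2 k) i) (q2 i)"
  shows "q1 = q2"
proof -
  obtain L1 where L1: "(\<lambda>n. pn m (x n - q1)) \<longlonglongrightarrow> L1" using alpha_conv[OF s1] by (auto simp: convergent_def)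
  obtain L2 where L2: "(\<lambda>n. pn m (x n - q2)) \<longlonglongrightarrow> L2" using alpha_conv[OF s2] by (auto simp: convergent_def)
  define \<Phi> where "\<Phi> n = pinner m (x n) (q1 - q2)" for n
  have \<Phi>eq: "\<Phi> n = ((pn m (x n - q2))\<^sup>2 - (pn m (x n - q1))\<^sup>2 - pnormsq m q2 + pnormsq m q1) / 2" for n
    unfolding \<Phi>_def pn_sq pnormsq_diff by (simp add: pinner_simps)
  have \<Phi>L: "\<Phi> \<longlonglongrightarrow> (L2\<^sup>2 - L1\<^sup>2 - pnormsq m q2 + pnormsq m q1) / 2"
    unfolding \<Phi>eq by (intro tendsto_intros L1 L2) auto
  define L where "L = (L2\<^sup>2 - L1\<^sup>2 - pnormsq m q2 + pnormsq m q1) / 2"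
  have a1: "(\<lambda>k. \<Phi> (r1 k)) \<longlonglongrightarrow> pinner m q1 (q1 - q2)" unfolding \<Phi>_def by (rule wc_pinner[OF w1])
  have b1: "(\<lambda>k. \<Phi> (r1 k)) \<longlonglongrightarrow> L" using LIMSEQ_subseq_LIMSEQ[OF \<Phi>L r1] unfolding L_def by (simp add: o_def)
  have a2: "(\<lambda>k. \<Phi> (r2 k)) \<longlonglongrightarrow> pinner m q2 (q1 - q2)" unfolding \<Phi>_def by (rule wc_pinner[OF w2])
  have b2: "(\<lambda>k. \<Phi> (r2 k)) \<longlonglongrightarrow> L" using LIMSEQ_subseq_LIMSEQ[OF \<Phi>L r2] unfolding L_def by (simp add: o_def)
  have "pinner m q1 (q1 - q2) = L" using a1 b1 by (rule LIMSEQ_unique)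
  moreover have "pinner m q2 (q1 - q2) = L" using a2 b2 by (rule LIMSEQ_unique)
  ultimately have "pinner m (q1 - q2) (q1 - q2) = 0" by (simp add: pinner_diff_left)
  hence "pn m (q1 - q2) = 0" unfolding pn_def pnormsq_pinner by simp
  thus ?thesis using PH_eqI issub_PH[OF s1] issub_PH[OF s2] by blast
qed

lemma main: "\<exists>xbar. solves_P m H f g xbar \<and>
    (\<forall>i\<in>{1..m}. weak_conv (\<lambda>n. x n i) (xbar i) \<and> weak_conv (\<lambda>n. p n i) (xbar i))"
proof -
  have "strict_mono (id :: nat \<Rightarrow> nat)" by (simp add: strict_mono_def)
  then obtain r0 xb where r0: "strict_mono r0" and xbPH: "xb \<in> PH m H"
    and wc0: "\<forall>i\<in>{1..m}. weak_conv (\<lambda>k. x (r0 k) i) (xb i)"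
    using PH_weak_compact[of id] by auto
  have xbZ: "issub xb (\<lambda>i. - G i xb)" by (rule cluster_Z[OF r0 xbPH wc0])
  have wx: "weak_conv (\<lambda>n. x n i) (xb i)" if i: "i \<in> {1..m}" for i
    unfolding weak_conv_def
  proof (rule allI, rule ccontr)
    fix v :: 'a assume nt: "\<not> (\<lambda>n. x n i \<bullet> v) \<longlonglongrightarrow> xb i \<bullet> v"
    then obtain \<epsilon> where \<epsilon>: "0 < \<epsilon>" and ne: "\<not> eventually (\<lambda>n. dist (x n i \<bullet> v) (xb i \<bullet> v) < \<epsilon>) sequentially"
      unfolding tendsto_iff by blast
    have "\<exists>s::nat\<Rightarrow>nat. strict_mono s \<and> (\<forall>k. \<not> dist (x (s k) i \<bullet> v) (xb i \<bullet> v) < \<epsilon>)"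
      by (rule not_eventually_sequentiallyD[OF ne])
    then obtain s :: "nat \<Rightarrow> nat" where s: "strict_mono s" and sk: "\<forall>k. \<not> dist (x (s k) i \<bullet> v) (xb i \<bullet> v) < \<epsilon>"
      by blast
    obtain r qq where r: "strict_mono r" and qqPH: "qq \<in> PH m H"
      and wq: "\<forall>i\<in>{1..m}. weak_conv (\<lambda>k. x (s (r k)) i) (qq i)"
      using PH_weak_compact[OF s] by blast
    have sr: "strict_mono (s \<circ> r)" using s r by (rule strict_mono_o)
    have wq': "\<forall>i\<in>{1..m}. weak_conv (\<lambda>k. x ((s \<circ> r) k) i) (qq i)" using wq by (simp add: o_def)
    have qqZ: "issub qq (\<lambda>i. - G i qq)" by (rule cluster_Z[OF sr qqPH wq'])
    have "qq = xb" by (rule xb_unique[OF qqZ xbZ sr r0 wq' wc0])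
    hence "(\<lambda>k. x (s (r k)) i \<bullet> v) \<longlonglongrightarrow> xb i \<bullet> v" using wq i unfolding weak_conv_def by blast
    hence "eventually (\<lambda>k. dist (x (s (r k)) i \<bullet> v) (xb i \<bullet> v) < \<epsilon>) sequentially"
      using \<epsilon> unfolding tendsto_iff by blast
    then obtain N where "\<forall>k\<ge>N. dist (x (s (r k)) i \<bullet> v) (xb i \<bullet> v) < \<epsilon>"
      unfolding eventually_sequentially by blast
    thus False using sk by blast
  qed
  have wp: "weak_conv (\<lambda>n. p n i) (xb i)" if i: "i \<in> {1..m}" for i
    by (rule weak_conv_close[OF wx[OF i] comp_norm_zero[OF res_p i]])
  have sol: "solves_P m H f g xb" unfolding solves_P_def
  proof (intro conjI xbPH ballI)
    fix i vv assume i: "i \<in> {1..m}" and vv: "vv \<in> H i"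
    define xv where "xv = xb(i := vv)"
    have xvPH: "xv \<in> PH m H" using xbPH i vv unfolding xv_def PH_def by auto
    have sub: "f xb + ereal (pinner m (\<lambda>j. - G j xb) (xv - xb)) \<le> f xv"
      using xbZ xvPH unfolding issub_def by blast
    have pe: "pinner m (\<lambda>j. - G j xb) (xv - xb) = - (G i xb \<bullet> (vv - xb i))"
    proof -
      have "pinner m (\<lambda>j. - G j xb) (xv - xb) = (\<Sum>j\<in>{1..m}. if j = i then - (G i xb \<bullet> (vv - xb i)) else 0)"
        unfolding pinner_def by (rule sum.cong) (auto simp: xv_def)
      also have "\<dots> = - (G i xb \<bullet> (vv - xb i))" using i by simp
      finally show ?thesis .
    qed
    have xbi: "xb i \<in> H i" using xbPH i unfolding PH_def by auto
    have gi: "g i (xb(i := xb i)) + G i xb \<bullet> (vv - xb i) \<le> g i (xb(i := vv))"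
    proof (rule convex_grad_ineq[where h="\<lambda>v. g i (xb(i := v))"])
      show "convex_on (H i) (\<lambda>v. g i (xb(i := v)))" using g_convex xbPH i by blast
      show "subspace (H i)" using Hsub i by blast
      show "((\<lambda>v. g i (xb(i := v))) has_derivative (\<lambda>d. G i xb \<bullet> d)) (at (xb i) within H i)"
        using G_deriv xbPH i by blast
    qed (use xbi vv in auto)
    hence gi': "g i xb + G i xb \<bullet> (vv - xb i) \<le> g i xv" unfolding xv_def by simp
    have fxb: "f xb = ereal (fr xb)" using xbZ f_fin xbPH unfolding issub_def by auto
    show "f xb + ereal (g i xb) \<le> f (xb(i := vv)) + ereal (g i (xb(i := vv)))"
    proof (cases "f xv = \<infinity>")
      case True thus ?thesis unfolding xv_def by simp
    next
      case False
      hence fxv: "f xv = ereal (fr xv)" using f_fin xvPH by blast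
      have "fr xb - G i xb \<bullet> (vv - xb i) \<le> fr xv" using sub unfolding pe fxb fxv by simp
      hence "fr xb + g i xb \<le> fr xv + g i xv" using gi' by linarith
      thus ?thesis using fxb fxv unfolding xv_def by simp
    qed
  qed
  show ?thesis using sol wx wp by blast
qed

end


theorem theorem3p3:
  fixes m :: nat
    and H :: "nat \<Rightarrow> 'a::{real_inner, complete_space} set"
    and f :: "(nat \<Rightarrow> 'a) \<Rightarrow> ereal"
    and g :: "nat \<Rightarrow> (nat \<Rightarrow> 'a) \<Rightarrow> real"
    and G :: "nat \<Rightarrow> (nat \<Rightarrow> 'a) \<Rightarrow> 'a"
    and z :: "nat \<Rightarrow> 'a"
    and chi eps :: real
    and \<gamma> :: "nat \<Rightarrow> real"
    and a b c :: "nat \<Rightarrow> nat \<Rightarrow> 'a"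
    and x y p q :: "nat \<Rightarrow> nat \<Rightarrow> 'a"
  assumes m: "m \<ge> 2"
    and H_sub: "\<forall>i\<in>{1..m}. subspace (H i) \<and> closed (H i)"
    and f_Gamma0: "Gamma0 m H f"
    and g_convex: "\<forall>xx\<in>PH m H. \<forall>i\<in>{1..m}. convex_on (H i) (\<lambda>v. g i (xx(i := v)))"
    and G_in: "\<forall>xx\<in>PH m H. \<forall>i\<in>{1..m}. G i xx \<in> H i"
    and G_deriv: "\<forall>xx\<in>PH m H. \<forall>i\<in>{1..m}.
        ((\<lambda>v. g i (xx(i := v))) has_derivative (\<lambda>h. G i xx \<bullet> h)) (at (xx i) within H i)"
    and G_mono: "\<forall>xx\<in>PH m H. \<forall>yy\<in>PH m H.
        0 \<le> (\<Sum>i\<in>{1..m}. (G i xx - G i yy) \<bullet> (xx i - yy i))"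
    and z_zero: "z \<in> PH m H"
        "(\<lambda>i. if i \<in> {1..m} then - G i z else 0) \<in> subdiff m H f z"
    and chi_pos: "0 < chi"
    and G_lip: "\<forall>xx\<in>PH m H. \<forall>yy\<in>PH m H.
        (\<Sum>i\<in>{1..m}. (norm (G i xx - G i yy))\<^sup>2) \<le> chi\<^sup>2 * (\<Sum>i\<in>{1..m}. (norm (xx i - yy i))\<^sup>2)"
    and eps_pos: "0 < eps" "eps < 1 / (chi + 1)"
    and gamma: "\<forall>n. eps \<le> \<gamma> n \<and> \<gamma> n \<le> (1 - eps) / chi"
    and x0: "x 0 \<in> PH m H"
    and abc: "\<forall>i\<in>{1..m}. (\<forall>n. a n i \<in> H i \<and> b n i \<in> H i \<and> c n i \<in> H i)
        \<and> summable (\<lambda>n. norm (a n i)) \<and> summable (\<lambda>n. norm (b n i)) \<and> summable (\<lambda>n. norm (c n i))"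
    and y_def: "\<forall>n. y n = (\<lambda>i. if i \<in> {1..m} then x n i - \<gamma> n *\<^sub>R (G i (x n) + a n i) else 0)"
    and p_def: "\<forall>n. p n = (\<lambda>i. if i \<in> {1..m}
        then prox m H (\<lambda>w. ereal (\<gamma> n) * f w) (y n) i + b n i else 0)"
    and q_def: "\<forall>n. q n = (\<lambda>i. if i \<in> {1..m} then p n i - \<gamma> n *\<^sub>R (G i (p n) + c n i) else 0)"
    and x_def: "\<forall>n. x (Suc n) = (\<lambda>i. if i \<in> {1..m} then x n i - y n i + q n i else 0)"
  shows "\<exists>xbar. solves_P m H f g xbar \<and>
    (\<forall>i\<in>{1..m}. weak_conv (\<lambda>n. x n i) (xbar i) \<and> weak_conv (\<lambda>n. p n i) (xbar i))"
proof -
  have T: "tseng m H f g G z chi eps \<gamma> a b c x y p q"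
    unfolding tseng_def using assms by blast
  show ?thesis using tseng.main[OF T] .
qed

end
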